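(* Let $F(\vec{\mathbf p},\mathbf q)$ be a disjunctive template, $\Gamma\subseteq\mathit{Fml}_J$ a set of basic formulas (containing no witness variables), $\vec\chi$ a sequence of Henkin formulas, $\forall x\varphi(x)$ a Henkin formula, and $a$ a witness variable that occurs free neither in $\forall x\varphi(x)$ nor in any member of $\vec\chi$. If $\Gamma\cup[\![\neg F(\vec\chi,\forall x\varphi(x))]\!]$ is consistent, then $\Gamma\cup[\![\neg F(\vec\chi,\varphi(a))]\!]$ is consistent.
   Context: Syntax of FOLPb: terms $t::=p_i\mid c\mid t\cdot t\mid t+t\mid !t\mid\mathsf b(t)\mid\mathsf{gen}_x(t)$; formulas $Px_1\dots x_n\mid\bot\mid\varphi\to\varphi\mid\forall x\varphi\mid t{:}_X\varphi$ ($X$ finite set of individual variables, $fv(t{:}_X\psi)=X$); $\mathit{Fml}_J$ is the set of these basic formulas. Axioms: A1 classical first-order; A2 $t{:}_{Xy}\varphi\to t{:}_X\varphi$ ($y$ not free in $\varphi$); A3 $t{:}_X\varphi\to t{:}_{Xy}\varphi$; B1 $t{:}_X\varphi\to\varphi$; B2 $t{:}_X(\varphi\to\psi)\to(s{:}_X\varphi\to[t\cdot s]{:}_X\psi)$; B3 $t{:}_X\varphi\to[t+s]{:}_X\varphi$, $s{:}_X\varphi\to[t+s]{:}_X\varphi$; B4 $t{:}_X\varphi\to!t{:}_Xt{:}_X\varphi$; B5 $t{:}_X\varphi\to\mathsf{gen}_x(t){:}_X\forall x\varphi$ ($x\notin X$); Bb $\forall y\,t{:}_{Xy}\varphi(y)\to\mathsf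 b(t){:}_X\forall y\varphi(y)$; rules MP and generalization (from hypotheses, not on variables free in the hypotheses). Henkin language: $\mathbf V$ countable set of witness variables that may occur free (including in subscripts) but are never quantified nor $\mathsf{gen}$ subscripts; the original variables are basic variables; Henkin formulas $\mathit{Fml}_J(\mathbf V)$. Standing assumption: $\mathcal{CS}$ is a fixed variant closed and axiomatically appropriate constant specification for the basic language; $\mathcal{CS}(\mathbf V)$ is the set of all $c{:}\psi$ with $c{:}\varphi\in\mathcal{CS}$ and $\psi$ obtained by replacing some free basic variables of $\varphi$ with distinct witness variables; $\vdash$ and "consistent" refer to the axiom system over $\mathit{Fml}_J(\mathbf V)$ with $\mathcal{CS}(\mathbf V)$ ($\Gamma$ consistent iff $\Gamma\not\vdash\bot$). Templates: a template on distinct propositional letters is a propositional modal formula built with $\neg,\vee,\wedge,\Box$, each letter occurring at most once; disjunctive if its only Boolean connective is $\vee$. Instantiation sets for Henkin formulas $\vec\varphi$: $[\![\mathbf p_i]\!]=\{\varphi_i\}$; $[\![\neg G]\!]=\{\neg\psi:\psi\in[\![G]\!]\}$; $[\![G\vee H]\!]=\{\psi\vee\theta:\psi\in[\![G]\!],\theta\in[\![H]\!]\}$; $[\![G\wedge H]\!]$ likewise with $\wedge$; $[\![\Box G]\!]=\{t{:}_X\psi:\psi\in[\![G]\!], t$ any term, $X$ the set of witness variables in $\psi\}$ (all evaluated at $\vec\varphi$). *)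

theory Defs
  imports Main "HOL-Library.FSet"
begin

text \<open>Individual variables: basic variables BV n and witness variables WV n.\<close>
datatype var = BV nat | WV nat

fun is_wit :: "var \<Rightarrow> bool" where
  "is_wit (BV n) = False"
| "is_wit (WV n) = True"

text \<open>Justification terms: p_i, c, t.s, t+s, !t, b(t), gen_x(t).\<close>
datatype jt = JV nat | JC nat | JApp jt jt | JSum jt jt | JBang jt | JB jt | JGen var jt

text \<open>Formulas: P x1..xn, bottom, implication, universal quantifier, t:_X phi (X finite).\<close>
datatype fm = Pred nat "var list" | Bot | Imp fm fm | All var fm | Just jt "var fset" fm

definition Neg :: "fm \<Rightarrow> fm" where "Neg p = Imp p Bot"
definition Or :: "fm \<Rightarrow> fm \<Rightarrow> fm" where "Or p q = Imp (Neg p) q"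
definition And :: "fm \<Rightarrow> fm \<Rightarrow> fm" where "And p q = Neg (Imp p (Neg q))"

fun fv :: "fm \<Rightarrow> var set" where
  "fv (Pred P xs) = set xs"
| "fv Bot = {}"
| "fv (Imp p q) = fv p \<union> fv q"
| "fv (All x p) = fv p - {x}"
| "fv (Just t X p) = fset X"

fun witst :: "jt \<Rightarrow> var fset" where
  "witst (JV n) = {||}"
| "witst (JC n) = {||}"
| "witst (JApp t s) = witst t |\<union>| witst s"
| "witst (JSum t s) = witst t |\<union>| witst s"
| "witst (JBang t) = witst t"
| "witst (JB t) = witst t"
| "witst (JGen v t) = ffilter is_wit {|v|} |\<union>| witst t"

fun wits :: "fm \<Rightarrow> var fset" where
  "wits (Pred P xs) = ffilter is_wit (fset_of_list xs)"
| "wits Bot = {||}"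
| "wits (Imp p q) = wits p |\<union>| wits q"
| "wits (All x p) = ffilter is_wit {|x|} |\<union>| wits p"
| "wits (Just t X p) = witst t |\<union>| ffilter is_wit X |\<union>| wits p"

fun henkin_tm :: "jt \<Rightarrow> bool" where
  "henkin_tm (JV n) = True"
| "henkin_tm (JC n) = True"
| "henkin_tm (JApp t s) = (henkin_tm t \<and> henkin_tm s)"
| "henkin_tm (JSum t s) = (henkin_tm t \<and> henkin_tm s)"
| "henkin_tm (JBang t) = henkin_tm t"
| "henkin_tm (JB t) = henkin_tm t"
| "henkin_tm (JGen v t) = (\<not> is_wit v \<and> henkin_tm t)"

text \<open>Henkin formulas: witness variables are never quantified nor gen-subscripts, and they
  always occur free (so every witness variable occurring inside t:_X psi belongs to X).\<close>
fun henkin :: "fm \<Rightarrow> bool" where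
  "henkin (Pred P xs) = True"
| "henkin Bot = True"
| "henkin (Imp p q) = (henkin p \<and> henkin q)"
| "henkin (All x p) = (\<not> is_wit x \<and> henkin p)"
| "henkin (Just t X p) = (henkin_tm t \<and> henkin p \<and> wits p |\<subseteq>| X)"

text \<open>Basic formulas (Fml_J): no witness variables at all.\<close>
definition basic :: "fm \<Rightarrow> bool" where "basic p \<longleftrightarrow> wits p = {||}"

fun substs :: "(var \<Rightarrow> var) \<Rightarrow> fm \<Rightarrow> fm" where
  "substs r (Pred P xs) = Pred P (map r xs)"
| "substs r Bot = Bot"
| "substs r (Imp p q) = Imp (substs r p) (substs r q)"
| "substs r (All z p) = All z (substs (r(z := z)) p)"
| "substs r (Just t X p) = Just t (fimage r X) (substs (\<lambda>v. if v |\<in>| X then r v else v) p)"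

definition subst :: "var \<Rightarrow> var \<Rightarrow> fm \<Rightarrow> fm" where
  "subst x y p = substs (id(x := y)) p"

text \<open>y is free for x in p (no capture by quantifiers or by the local variables of
  a justification formula t:_X psi, i.e. those free in psi but not in X).\<close>
fun freefor :: "var \<Rightarrow> var \<Rightarrow> fm \<Rightarrow> bool" where
  "freefor x y (Pred P xs) = True"
| "freefor x y Bot = True"
| "freefor x y (Imp p q) = (freefor x y p \<and> freefor x y q)"
| "freefor x y (All z p) = (x \<notin> fv (All z p) \<or> (z \<noteq> y \<and> freefor x y p))"
| "freefor x y (Just t X p) = (x |\<notin>| X \<or> ((y \<in> fv p \<longrightarrow> y |\<in>| X) \<and> freefor x y p))"

fun rename_tm :: "(var \<Rightarrow> var) \<Rightarrow> jt \<Rightarrow> jt" where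
  "rename_tm r (JV n) = JV n"
| "rename_tm r (JC n) = JC n"
| "rename_tm r (JApp t s) = JApp (rename_tm r t) (rename_tm r s)"
| "rename_tm r (JSum t s) = JSum (rename_tm r t) (rename_tm r s)"
| "rename_tm r (JBang t) = JBang (rename_tm r t)"
| "rename_tm r (JB t) = JB (rename_tm r t)"
| "rename_tm r (JGen v t) = JGen (r v) (rename_tm r t)"

fun rename :: "(var \<Rightarrow> var) \<Rightarrow> fm \<Rightarrow> fm" where
  "rename r (Pred P xs) = Pred P (map r xs)"
| "rename r Bot = Bot"
| "rename r (Imp p q) = Imp (rename r p) (rename r q)"
| "rename r (All z p) = All (r z) (rename r p)"
| "rename r (Just t X p) = Just (rename_tm r t) (fimage r X) (rename r p)"

definition variant :: "fm \<Rightarrow> fm \<Rightarrow> bool" where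
  "variant A B \<longleftrightarrow> (\<exists>\<sigma>::nat \<Rightarrow> nat. inj \<sigma> \<and>
      B = rename (\<lambda>v. case v of BV n \<Rightarrow> BV (\<sigma> n) | WV n \<Rightarrow> WV n) A)"

inductive axiom :: "fm \<Rightarrow> bool" where
  A1_K: "axiom (Imp p (Imp q p))"
| A1_S: "axiom (Imp (Imp p (Imp q r)) (Imp (Imp p q) (Imp p r)))"
| A1_DN: "axiom (Imp (Neg (Neg p)) p)"
| A1_inst: "freefor x y p \<Longrightarrow> axiom (Imp (All x p) (subst x y p))"
| A1_dist: "x \<notin> fv p \<Longrightarrow> axiom (Imp (All x (Imp p q)) (Imp p (All x q)))"
| A2: "y \<notin> fv p \<Longrightarrow> axiom (Imp (Just t (finsert y X) p) (Just t X p))"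
| A3: "axiom (Imp (Just t X p) (Just t (finsert y X) p))"
| B1: "axiom (Imp (Just t X p) p)"
| B2: "axiom (Imp (Just t X (Imp p q)) (Imp (Just s X p) (Just (JApp t s) X q)))"
| B3l: "axiom (Imp (Just t X p) (Just (JSum t s) X p))"
| B3r: "axiom (Imp (Just s X p) (Just (JSum t s) X p))"
| B4: "axiom (Imp (Just t X p) (Just (JBang t) X (Just t X p)))"
| B5: "x |\<notin>| X \<Longrightarrow> axiom (Imp (Just t X p) (Just (JGen x t) X (All x p)))"
| Bb: "y |\<notin>| X \<Longrightarrow> axiom (Imp (All y (Just t (finsert y X) p)) (Just (JB t) X (All y p)))"

definition const_spec :: "fm set \<Rightarrow> bool" where
  "const_spec CS \<longleftrightarrow> (\<forall>f\<in>CS. \<exists>c A. f = Just (JC c) {||} A \<and> basic A \<and> axiom A)"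

definition axiomatically_appropriate :: "fm set \<Rightarrow> bool" where
  "axiomatically_appropriate CS \<longleftrightarrow>
     (\<forall>A. basic A \<and> axiom A \<longrightarrow> (\<exists>c. Just (JC c) {||} A \<in> CS))"

definition variant_closed :: "fm set \<Rightarrow> bool" where
  "variant_closed CS \<longleftrightarrow>
     (\<forall>c A B. Just (JC c) {||} A \<in> CS \<and> variant A B \<longrightarrow> Just (JC c) {||} B \<in> CS)"

text \<open>CS(V): replace some free basic variables of A by distinct witness variables; the
  witness variables (which always count as free) are recorded in the subscript.\<close>
definition CSV :: "fm set \<Rightarrow> fm set" where
  "CSV CS = {Just (JC c) (wits B) B | c A B. Just (JC c) {||} A \<in> CS \<and>
      (\<exists>r. (\<forall>v. r v \<noteq> v \<longrightarrow> v \<in> fv A \<and> \<not> is_wit v \<and> is_wit (r v))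
           \<and> inj_on r {v. r v \<noteq> v} \<and> B = substs r A)}"

text \<open>derives CS H p: p is derivable using exactly the (finitely many) hypotheses H;
  generalization is allowed on basic variables not free in the hypotheses used.\<close>
inductive derives :: "fm set \<Rightarrow> fm set \<Rightarrow> fm \<Rightarrow> bool" for CS where
  hyp: "derives CS {p} p"
| ax: "axiom p \<Longrightarrow> henkin p \<Longrightarrow> derives CS {} p"
| cs: "p \<in> CSV CS \<Longrightarrow> derives CS {} p"
| mp: "derives CS H1 (Imp p q) \<Longrightarrow> derives CS H2 p \<Longrightarrow> derives CS (H1 \<union> H2) q"
| gen: "derives CS H p \<Longrightarrow> \<not> is_wit x \<Longrightarrow> (\<forall>h\<in>H. x \<notin> fv h) \<Longrightarrow> derives CS H (All x p)"

definition provable :: "fm set \<Rightarrow> fm set \<Rightarrow> fm \<Rightarrow> bool" where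
  "provable CS \<Gamma> p \<longleftrightarrow> (\<exists>H. H \<subseteq> \<Gamma> \<and> derives CS H p)"

definition consistent :: "fm set \<Rightarrow> fm set \<Rightarrow> bool" where
  "consistent CS \<Gamma> \<longleftrightarrow> \<not> provable CS \<Gamma> Bot"

datatype tmpl = TL nat | TNeg tmpl | TOr tmpl tmpl | TAnd tmpl tmpl | TBox tmpl

fun letters :: "tmpl \<Rightarrow> nat list" where
  "letters (TL i) = [i]"
| "letters (TNeg G) = letters G"
| "letters (TOr G H) = letters G @ letters H"
| "letters (TAnd G H) = letters G @ letters H"
| "letters (TBox G) = letters G"

definition template :: "tmpl \<Rightarrow> bool" where
  "template F \<longleftrightarrow> distinct (letters F)"

fun disjunctive :: "tmpl \<Rightarrow> bool" where
  "disjunctive (TL i) = True"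
| "disjunctive (TNeg G) = False"
| "disjunctive (TOr G H) = (disjunctive G \<and> disjunctive H)"
| "disjunctive (TAnd G H) = False"
| "disjunctive (TBox G) = disjunctive G"

fun inst :: "(nat \<Rightarrow> fm) \<Rightarrow> tmpl \<Rightarrow> fm set" where
  "inst \<chi> (TL i) = {\<chi> i}"
| "inst \<chi> (TNeg G) = Neg ` inst \<chi> G"
| "inst \<chi> (TOr G H) = {Or p q | p q. p \<in> inst \<chi> G \<and> q \<in> inst \<chi> H}"
| "inst \<chi> (TAnd G H) = {And p q | p q. p \<in> inst \<chi> G \<and> q \<in> inst \<chi> H}"
| "inst \<chi> (TBox G) = {Just t (wits p) p | t p. henkin_tm t \<and> p \<in> inst \<chi> G}"

end

theory Submission
  imports Defs
begin

fun allvars_tm :: "jt \<Rightarrow> var set" where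
  "allvars_tm (JV n) = {}"
| "allvars_tm (JC n) = {}"
| "allvars_tm (JApp t s) = allvars_tm t \<union> allvars_tm s"
| "allvars_tm (JSum t s) = allvars_tm t \<union> allvars_tm s"
| "allvars_tm (JBang t) = allvars_tm t"
| "allvars_tm (JB t) = allvars_tm t"
| "allvars_tm (JGen v t) = insert v (allvars_tm t)"

fun allvars :: "fm \<Rightarrow> var set" where
  "allvars (Pred P xs) = set xs"
| "allvars Bot = {}"
| "allvars (Imp p q) = allvars p \<union> allvars q"
| "allvars (All x p) = insert x (allvars p)"
| "allvars (Just t X p) = allvars_tm t \<union> fset X \<union> allvars p"

lemma finite_allvars_tm[simp]: "finite (allvars_tm t)" by (induction t) auto
lemma finite_allvars[simp]: "finite (allvars p)" by (induction p) auto

lemma witst_allvars: "is_wit v \<Longrightarrow> (v |\<in>| witst t) = (v \<in> allvars_tm t)"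
  by (induction t) auto
lemma wits_allvars: "is_wit v \<Longrightarrow> (v |\<in>| wits p) = (v \<in> allvars p)"
  by (induction p) (auto simp: witst_allvars fset_of_list.rep_eq)
lemma wits_is_wit: "v |\<in>| wits p \<Longrightarrow> is_wit v"
proof (induction p)
  case (Just t X p) then show ?case
    by (induction t) auto
qed auto
lemma fv_allvars: "fv p \<subseteq> allvars p" by (induction p) auto
lemma fv_wits: "is_wit v \<Longrightarrow> v \<in> fv p \<Longrightarrow> v |\<in>| wits p"
  by (induction p) (auto simp: fset_of_list.rep_eq)
lemma henkin_tm_witst: "henkin_tm t \<Longrightarrow> witst t = {||}"
  by (induction t) auto
lemma henkin_tm_allvars: "henkin_tm t \<Longrightarrow> v \<in> allvars_tm t \<Longrightarrow> \<not> is_wit v"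
  by (induction t) auto
lemma henkin_wits_fv: "henkin p \<Longrightarrow> v |\<in>| wits p \<Longrightarrow> v \<in> fv p"
  by (induction p) (auto simp: henkin_tm_witst fset_of_list.rep_eq dest: wits_is_wit)

lemma rename_tm_id: "(\<forall>v\<in>allvars_tm t. r v = v) \<Longrightarrow> rename_tm r t = t"
  by (induction t) auto
lemma rename_id: "(\<forall>v\<in>allvars p. r v = v) \<Longrightarrow> rename r p = p"
  by (induction p) (auto simp: rename_tm_id map_idI fset_eqI)

lemma substs_id: "(\<forall>v\<in>allvars p. s v = v) \<Longrightarrow> substs s p = p"
proof (induction p arbitrary: s)
  case (Pred P xs) then show ?case by (simp add: map_idI)
next
  case (All z p) then show ?case by simp
next
  case (Just t X p)
  have "s |`| X = X" using Just.prems by (intro fset_eqI) (auto simp: rev_image_eqI)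
  moreover have "substs (\<lambda>v. if v |\<in>| X then s v else v) p = p"
    using Just by auto
  ultimately show ?case by simp
qed auto

lemma allvars_substs: "allvars (substs s p) \<subseteq> allvars p \<union> s ` allvars p"
proof (induction p arbitrary: s)
  case (All z p)
  have "allvars (substs (s(z:=z)) p) \<subseteq> allvars p \<union> (s(z:=z)) ` allvars p" by (rule All.IH)
  also have "\<dots> \<subseteq> insert z (allvars p) \<union> s ` insert z (allvars p)" by auto
  finally show ?case by auto
next
  case (Just t X p)
  let ?si = "\<lambda>v. if v |\<in>| X then s v else v"
  have "allvars (substs ?si p) \<subseteq> allvars p \<union> ?si ` allvars p" by (rule Just.IH)
  also have "\<dots> \<subseteq> allvars p \<union> s ` (fset X \<union> allvars p)" by auto
  finally show ?case by auto
next
  case (Imp p q)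
  have "allvars (substs s p) \<subseteq> allvars p \<union> s ` allvars p" "allvars (substs s q) \<subseteq> allvars q \<union> s ` allvars q"
    using Imp.IH by auto
  then show ?case by auto
qed auto

lemma fv_substs: "fv (substs s p) \<subseteq> s ` fv p"
proof (induction p arbitrary: s)
  case (All z p)
  have "fv (substs (s(z:=z)) p) \<subseteq> (s(z:=z)) ` fv p" by (rule All.IH)
  then show ?case by auto
next
  case (Imp p q)
  have "fv (substs s p) \<subseteq> s ` fv p" "fv (substs s q) \<subseteq> s ` fv q"
    using Imp.IH by auto
  then show ?case by auto
qed auto

lemma wits_substs: "fset (wits (substs s p)) \<subseteq> fset (wits p) \<union> s ` {v \<in> allvars p. s v \<noteq> v}"
proof (induction p arbitrary: s)
  case (Pred P xs)
  have "fset (wits (substs s (Pred P xs))) = {v \<in> s ` set xs. is_wit v}" by (auto simp: fset_of_list.rep_eq)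
  moreover have "fset (wits (Pred P xs)) = {v \<in> set xs. is_wit v}" by (auto simp: fset_of_list.rep_eq)
  ultimately show ?case by force
next
  case (All z p)
  have 1: "fset (wits (substs (s(z:=z)) p)) \<subseteq> fset (wits p) \<union> (s(z:=z)) ` {v \<in> allvars p. (s(z:=z)) v \<noteq> v}" by (rule All.IH)
  have 2: "(s(z:=z)) ` {v \<in> allvars p. (s(z:=z)) v \<noteq> v} \<subseteq> s ` {v \<in> allvars (All z p). s v \<noteq> v}"
    by (auto simp: image_iff)
  have 3: "fset (wits (substs s (All z p))) = {v \<in> {z}. is_wit v} \<union> fset (wits (substs (s(z:=z)) p))" by auto
  have 4: "fset (wits (All z p)) = {v \<in> {z}. is_wit v} \<union> fset (wits p)" by auto
  show ?case unfolding 3 4 using 1 2 by blast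
next
  case (Imp p q)
  have "fset (wits (substs s p)) \<subseteq> fset (wits p) \<union> s ` {v \<in> allvars p. s v \<noteq> v}"
       "fset (wits (substs s q)) \<subseteq> fset (wits q) \<union> s ` {v \<in> allvars q. s v \<noteq> v}"
    using Imp.IH by auto
  then show ?case by auto
next
  case (Just t X p)
  let ?si = "\<lambda>v. if v |\<in>| X then s v else v"
  let ?R = "s ` {v \<in> allvars (Just t X p). s v \<noteq> v}"
  have 1: "fset (wits (substs ?si p)) \<subseteq> fset (wits p) \<union> ?si ` {v \<in> allvars p. ?si v \<noteq> v}" by (rule Just.IH)
  have 2: "?si ` {v \<in> allvars p. ?si v \<noteq> v} \<subseteq> ?R"
  proof
    fix w assume "w \<in> ?si ` {v \<in> allvars p. ?si v \<noteq> v}"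
    then obtain v where v: "v \<in> allvars p" "?si v \<noteq> v" "w = ?si v" by blast
    then have "v |\<in>| X" by presburger
    then show "w \<in> ?R" using v by auto
  qed
  have 3: "{v \<in> s ` fset X. is_wit v} \<subseteq> {v \<in> fset X. is_wit v} \<union> ?R"
  proof
    fix w assume "w \<in> {v \<in> s ` fset X. is_wit v}"
    then obtain v where v: "v |\<in>| X" "w = s v" "is_wit w" by blast
    show "w \<in> {v \<in> fset X. is_wit v} \<union> ?R"
    proof (cases "s v = v")
      case True then show ?thesis using v by auto
    next
      case False then have "w \<in> ?R" using v by auto
      then show ?thesis by blast
    qed
  qed
  have 4: "fset (wits (substs s (Just t X p))) = fset (witst t) \<union> {v \<in> s ` fset X. is_wit v} \<union> fset (wits (substs ?si p))"
    by auto
  have 5: "fset (wits (Just t X p)) = fset (witst t) \<union> {v \<in> fset X. is_wit v} \<union> fset (wits p)"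
    by auto
  show ?case unfolding 4 5 using 1 2 3 by blast
qed auto

lemma henkin_substs: "henkin p \<Longrightarrow> (\<forall>v. s v \<noteq> v \<longrightarrow> \<not> is_wit v) \<Longrightarrow> henkin (substs s p)"
proof (induction p arbitrary: s)
  case (All z p)
  then show ?case by auto
next
  case (Just t X p)
  let ?si = "\<lambda>v. if v |\<in>| X then s v else v"
  have h: "henkin (substs ?si p)" using Just by auto
  have 1: "fset (wits (substs ?si p)) \<subseteq> fset (wits p) \<union> ?si ` {v \<in> allvars p. ?si v \<noteq> v}" by (rule wits_substs)
  have 2: "fset (wits p) \<subseteq> fset X" using Just.prems by (auto simp: less_eq_fset.rep_eq)
  have 3: "fset (wits p) \<subseteq> s ` fset X"
  proof
    fix w assume w: "w \<in> fset (wits p)"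
    then have "s w = w" using Just.prems(2) wits_is_wit by blast
    then show "w \<in> s ` fset X" using w 2 by (metis image_eqI subsetD)
  qed
  have 4: "?si ` {v \<in> allvars p. ?si v \<noteq> v} \<subseteq> s ` fset X"
  proof
    fix w assume "w \<in> ?si ` {v \<in> allvars p. ?si v \<noteq> v}"
    then obtain v where v: "?si v \<noteq> v" "w = ?si v" by blast
    then have "v |\<in>| X" by presburger
    then show "w \<in> s ` fset X" using v by auto
  qed
  have "fset (wits (substs ?si p)) \<subseteq> s ` fset X" using 1 3 4 by blast
  then have "wits (substs ?si p) |\<subseteq>| s |`| X" by (simp add: less_eq_fset.rep_eq)
  then show ?case using h Just.prems by simp
qed auto

lemma fv_rename: "inj_on r (allvars p) \<Longrightarrow> fv (rename r p) = r ` fv p"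
proof (induction p)
  case (All z p)
  then have "fv (rename r p) = r ` fv p" by simp
  moreover have "r ` (fv p - {z}) = r ` fv p - {r z}"
    using All.prems fv_allvars[of p] by (auto simp: inj_on_def)
  ultimately show ?case by simp
qed (auto simp: inj_on_Un)

lemma wits_rename: "(\<forall>v. \<not> is_wit v \<longrightarrow> \<not> is_wit (r v)) \<Longrightarrow> fset (wits (rename r p)) \<subseteq> r ` fset (wits p)"
proof (induction p)
  case (Pred P xs) then show ?case by (auto simp: fset_of_list.rep_eq)
next
  case (Just t X p)
  have "fset (witst (rename_tm r t)) \<subseteq> r ` fset (witst t)" using Just.prems
    by (induction t) auto
  then show ?case using Just by auto
qed auto

lemma henkin_tm_rename: "henkin_tm t \<Longrightarrow> (\<forall>v. \<not> is_wit v \<longrightarrow> \<not> is_wit (r v)) \<Longrightarrow> henkin_tm (rename_tm r t)"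
  by (induction t) auto

lemma henkin_rename: "henkin p \<Longrightarrow> (\<forall>v. \<not> is_wit v \<longrightarrow> \<not> is_wit (r v)) \<Longrightarrow> henkin (rename r p)"
proof (induction p)
  case (Just t X p)
  have "fset (wits (rename r p)) \<subseteq> r ` fset (wits p)" using Just.prems by (intro wits_rename) auto
  also have "\<dots> \<subseteq> r ` fset X" using Just.prems by (auto simp: less_eq_fset.rep_eq)
  finally show ?case using Just by (auto simp: less_eq_fset.rep_eq henkin_tm_rename)
qed auto

lemma rename_substs:
  "inj_on r (allvars p) \<Longrightarrow> (\<forall>v\<in>allvars p. s' (r v) = r (s v)) \<Longrightarrow>
   rename r (substs s p) = substs s' (rename r p)"
proof (induction p arbitrary: s s')
  case (All z p)
  have "rename r (substs (s(z:=z)) p) = substs (s'(r z := r z)) (rename r p)"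
  proof (rule All.IH)
    show "inj_on r (allvars p)" using All.prems(1) by (auto intro: inj_on_subset)
    show "\<forall>v\<in>allvars p. (s'(r z := r z)) (r v) = r ((s(z := z)) v)"
    proof
      fix v assume v: "v \<in> allvars p"
      show "(s'(r z := r z)) (r v) = r ((s(z := z)) v)"
      proof (cases "v = z")
        case False
        then have "r v \<noteq> r z" using All.prems(1) v by (auto simp: inj_on_def)
        then show ?thesis using False All.prems(2) v by auto
      qed simp
    qed
  qed
  then show ?case by simp
next
  case (Just t X p)
  let ?si = "\<lambda>v. if v |\<in>| X then s v else v"
  let ?si' = "\<lambda>v. if v |\<in>| r |`| X then s' v else v"
  have "rename r (substs ?si p) = substs ?si' (rename r p)"
  proof (rule Just.IH)
    show "inj_on r (allvars p)" using Just.prems(1) by (auto intro: inj_on_subset)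
    show "\<forall>v\<in>allvars p. ?si' (r v) = r (?si v)"
    proof
      fix v assume v: "v \<in> allvars p"
      show "?si' (r v) = r (?si v)"
      proof (cases "v |\<in>| X")
        case False
        then have "r v \<notin> r ` fset X" using Just.prems(1) v by (auto simp: inj_on_def)
        then show ?thesis using False by auto
      next
        case True then show ?thesis using Just.prems(2) by auto
      qed
    qed
  qed
  moreover have "r |`| (s |`| X) = s' |`| (r |`| X)"
    using Just.prems(2) by (intro fset_eqI) (auto simp: image_iff)
  ultimately show ?case by simp
qed (auto simp: inj_on_Un)

lemma substs_comp:
  "wits p = {||} \<Longrightarrow> (\<forall>v. s v \<noteq> v \<longrightarrow> is_wit (s v)) \<Longrightarrow> (\<forall>w. is_wit w \<longrightarrow> t w = w) \<Longrightarrow>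
   substs t (substs s p) = substs (t \<circ> s) p"
proof (induction p arbitrary: s t)
  case (All z p)
  have nz: "\<not> is_wit z" using All.prems(1) wits_allvars[of z "All z p"] by auto
  have wp: "wits p = {||}" using All.prems(1) by (simp add: sup_eq_bot_iff)
  have si: "\<forall>v. (s(z:=z)) v \<noteq> v \<longrightarrow> is_wit ((s(z:=z)) v)" using All.prems(2) by simp
  have ti: "\<forall>w. is_wit w \<longrightarrow> (t(z:=z)) w = w" using All.prems(3) by simp
  have "substs (t(z:=z)) (substs (s(z:=z)) p) = substs (t(z:=z) \<circ> s(z:=z)) p"
    by (rule All.IH[OF wp si ti])
  moreover have "t(z:=z) \<circ> s(z:=z) = (t \<circ> s)(z:=z)"
  proof
    fix v show "(t(z:=z) \<circ> s(z:=z)) v = ((t \<circ> s)(z:=z)) v"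
    proof (cases "v = z")
      case False
      have "s v \<noteq> z"
      proof
        assume e: "s v = z"
        then have "s v \<noteq> v" using False by simp
        then have "is_wit (s v)" using All.prems(2) by blast
        then show False using nz e by simp
      qed
      then show ?thesis using False by simp
    qed simp
  qed
  ultimately show ?case by (metis substs.simps(4))
next
  case (Just u X p)
  let ?si = "\<lambda>v. if v |\<in>| X then s v else v"
  let ?ti = "\<lambda>v. if v |\<in>| s |`| X then t v else v"
  let ?ci = "\<lambda>v. if v |\<in>| X then t (s v) else v"
  have wp: "wits p = {||}" using Just.prems(1) by (simp add: sup_eq_bot_iff)
  have si: "\<forall>v. ?si v \<noteq> v \<longrightarrow> is_wit (?si v)"
  proof (intro allI impI)
    fix v assume "?si v \<noteq> v"
    then have "v |\<in>| X" "s v \<noteq> v" by (auto split: if_splits)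
    then show "is_wit (?si v)" using Just.prems(2) by simp
  qed
  have ti: "\<forall>w. is_wit w \<longrightarrow> ?ti w = w" using Just.prems(3) by simp
  have IH: "substs ?ti (substs ?si p) = substs (?ti \<circ> ?si) p"
    by (rule Just.IH[OF wp si ti])
  have eq: "?ti \<circ> ?si = ?ci"
  proof
    fix v show "(?ti \<circ> ?si) v = ?ci v"
    proof (cases "v |\<in>| X")
      case False
      have "?ti v = v"
      proof (cases "v |\<in>| s |`| X")
        case True
        then have "v \<in> s ` fset X" by simp
        then obtain w where w: "w |\<in>| X" "v = s w" by (rule imageE)
        have "s w \<noteq> w"
        proof
          assume "s w = w" then show False using w False by simp
        qed
        then have "is_wit (s w)" using Just.prems(2) by simp
        then have "is_wit v" using w(2) by simp
        then have "t v = v" using Just.prems(3) by simp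
        then show ?thesis by simp
      next
        case False then show ?thesis by simp
      qed
      note h = this
      have e1: "(?ti \<circ> ?si) v = ?ti v" using False by simp
      have h2: "?ci v = v" using False by simp
      show ?thesis by (simp only: e1 h h2)
    next
      case True
      have 1: "?si v = s v" using True by simp
      have "s v |\<in>| s |`| X" using True by simp
      then have 2: "?ti (s v) = t (s v)" by simp
      have 3: "?ci v = t (s v)" using True by simp
      have e1: "(?ti \<circ> ?si) v = ?ti (s v)" using True by simp
      show ?thesis by (simp only: e1 2 3)
    qed
  qed
  have A: "substs ?ti (substs ?si p) = substs ?ci p"
    using trans[OF IH arg_cong[of _ _ "\<lambda>f. substs f p", OF eq]] .
  show ?case using A by (simp add: fimage_fimage comp_def)
next
  case (Imp p q)
  have "wits p = {||}" "wits q = {||}" using Imp.prems(1) by (simp_all add: sup_eq_bot_iff)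
  then show ?case using Imp.IH Imp.prems(2,3) by simp
qed auto

lemma idupd: "id(x:=z) = (\<lambda>a. if a = x then z else a)" by auto

lemma subst_notfree: "x \<notin> fv p \<Longrightarrow> substs (id(x:=z)) p = p"
proof (induction p)
  case (All w p)
  show ?case
  proof (cases "w = x")
    case True then show ?thesis by (simp add: substs_id)
  next
    case False
    have e: "(id(x:=z))(w:=w) = id(x:=z)" using False by auto
    have "substs (id(x:=z)) p = p" using All False by (simp add: idupd)
    then show ?thesis by (simp only: substs.simps e)
  qed
next
  case (Just t X p)
  have "(\<lambda>v. if v |\<in>| X then (if v = x then z else v) else v) = id" using Just.prems by auto
  moreover have "(\<lambda>a. if a = x then z else a) |`| X = X" using Just.prems by (intro fset_eqI) (auto simp: image_iff)
  ultimately show ?case by (simp add: substs_id)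
qed (auto simp: map_idI)

lemma allvars_subst: "x \<in> fv p \<Longrightarrow> z \<in> allvars (substs (id(x:=z)) p)"
proof (induction p)
  case (All w p)
  then have "w \<noteq> x" by auto
  then have e: "(id(x:=z))(w:=w) = id(x:=z)" by auto
  have "z \<in> allvars (substs (id(x:=z)) p)" using All \<open>w \<noteq> x\<close> by (simp add: idupd)
  then show ?case by (simp only: substs.simps e allvars.simps) simp
qed auto

lemma freefor_notfree: "x \<notin> fv p \<Longrightarrow> freefor x y p"
  by (induction p) auto

lemma freefor_fresh: "y \<notin> allvars p \<Longrightarrow> freefor x y p"
  using fv_allvars by (induction p) auto

lemma freefor_self: "freefor x x p"
  by (induction p) auto

lemma freefor_rename:
  "freefor x z p \<Longrightarrow> inj_on r (insert x (insert z (allvars p))) \<Longrightarrow> freefor (r x) (r z) (rename r p)"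
proof (induction p)
  case (Imp p q) then show ?case by (auto intro: inj_on_subset)
next
  case (All w p)
  have inj: "inj_on r (allvars (All w p))" using All.prems(2) by (auto intro: inj_on_subset)
  have fvr: "fv (rename r (All w p)) = r ` fv (All w p)" by (rule fv_rename[OF inj])
  show ?case
  proof (cases "x \<in> fv (All w p)")
    case False
    then have "r x \<notin> r ` fv (All w p)" using All.prems(2) fv_allvars[of "All w p"]
      by (auto simp: inj_on_def)
    then show ?thesis using fvr by simp
  next
    case True
    then have "w \<noteq> z" "freefor x z p" using All.prems(1) by auto
    then have "r w \<noteq> r z" using All.prems(2) by (auto simp: inj_on_def)
    moreover have "freefor (r x) (r z) (rename r p)"
      using \<open>freefor x z p\<close> All.prems(2) by (intro All.IH) (auto intro: inj_on_subset)
    ultimately show ?thesis by simp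
  qed
next
  case (Just t X p)
  have inj: "inj_on r (allvars p)" using Just.prems(2) by (auto intro: inj_on_subset)
  show ?case
  proof (cases "x |\<in>| X")
    case False
    then have "r x \<notin> r ` fset X" using Just.prems(2) by (auto simp: inj_on_def)
    then show ?thesis by simp
  next
    case True
    then have 1: "z \<in> fv p \<longrightarrow> z |\<in>| X" and 2: "freefor x z p" using Just.prems(1) by auto
    have "r z \<in> fv (rename r p) \<longrightarrow> r z \<in> r ` fset X"
    proof
      assume "r z \<in> fv (rename r p)"
      then have "r z \<in> r ` fv p" using fv_rename[OF inj] by simp
      then obtain u where "u \<in> fv p" "r u = r z" by auto
      then have "u = z" using Just.prems(2) fv_allvars[of p] by (auto simp: inj_on_def)
      then show "r z \<in> r ` fset X" using 1 \<open>u \<in> fv p\<close> by auto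
    qed
    moreover have "freefor (r x) (r z) (rename r p)"
      using 2 Just.prems(2) by (intro Just.IH) (auto intro: inj_on_subset)
    ultimately show ?thesis by simp
  qed
qed auto

lemma witst_henkin_tm: "witst t = {||} \<Longrightarrow> henkin_tm t"
  by (induction t) (auto simp: sup_eq_bot_iff)

lemma basic_henkin: "wits p = {||} \<Longrightarrow> henkin p"
  by (induction p) (auto simp: sup_eq_bot_iff witst_henkin_tm)

lemma henkin_Neg[simp]: "henkin (Neg p) = henkin p" by (simp add: Neg_def)
lemma henkin_Or[simp]: "henkin (Or p q) = (henkin p \<and> henkin q)" by (simp add: Or_def)
lemma wits_Neg[simp]: "wits (Neg p) = wits p" by (simp add: Neg_def)
lemma wits_Or[simp]: "wits (Or p q) = wits p |\<union>| wits q" by (simp add: Or_def Neg_def)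
lemma fv_Neg[simp]: "fv (Neg p) = fv p" by (simp add: Neg_def)
lemma fv_Or[simp]: "fv (Or p q) = fv p \<union> fv q" by (simp add: Or_def Neg_def)
lemma allvars_Neg[simp]: "allvars (Neg p) = allvars p" by (simp add: Neg_def)
lemma allvars_Or[simp]: "allvars (Or p q) = allvars p \<union> allvars q" by (simp add: Or_def Neg_def)
lemma rename_Neg[simp]: "rename r (Neg p) = Neg (rename r p)" by (simp add: Neg_def)
lemma rename_Or[simp]: "rename r (Or p q) = Or (rename r p) (rename r q)" by (simp add: Or_def Neg_def)

lemma derives_finite: "derives CS H p \<Longrightarrow> finite H"
  by (induction rule: derives.induct) auto

locale L =
  fixes CS :: "fm set"
  assumes cs: "const_spec CS" and aa: "axiomatically_appropriate CS"
begin

lemma CS_elem: "Just (JC c) {||} A \<in> CS \<Longrightarrow> basic A \<and> axiom A"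
  using cs unfolding const_spec_def by fastforce

lemma henkin_CSV: "p \<in> CSV CS \<Longrightarrow> henkin p"
proof -
  assume "p \<in> CSV CS"
  then obtain c A B r where p: "p = Just (JC c) (wits B) B" and A: "Just (JC c) {||} A \<in> CS"
    and r: "\<forall>v. r v \<noteq> v \<longrightarrow> v \<in> fv A \<and> \<not> is_wit v \<and> is_wit (r v)" and B: "B = substs r A"
    unfolding CSV_def by blast
  have "henkin A" using CS_elem[OF A] basic_henkin unfolding basic_def by blast
  then have "henkin B" using B r henkin_substs by blast
  then show ?thesis using p by simp
qed

lemma derives_henkin: "derives CS H p \<Longrightarrow> \<forall>h\<in>H. henkin h \<Longrightarrow> henkin p"
  by (induction rule: derives.induct) (auto simp: henkin_CSV)

abbreviation PR where "PR \<equiv> provable CS"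

lemma pr_hyp: "p \<in> G \<Longrightarrow> PR G p"
  unfolding provable_def by (intro exI[of _ "{p}"]) (auto intro: derives.hyp)

lemma pr_ax: "axiom p \<Longrightarrow> henkin p \<Longrightarrow> PR G p"
  unfolding provable_def by (intro exI[of _ "{}"]) (auto intro: derives.ax)

lemma pr_cs: "p \<in> CSV CS \<Longrightarrow> PR G p"
  unfolding provable_def by (intro exI[of _ "{}"]) (auto intro: derives.cs)

lemma pr_mp: "PR G (Imp p q) \<Longrightarrow> PR G p \<Longrightarrow> PR G q"
  unfolding provable_def by (meson Un_subset_iff derives.mp)

lemma pr_mono: "PR G p \<Longrightarrow> G \<subseteq> G' \<Longrightarrow> PR G' p"
  unfolding provable_def by auto

lemma pr_gen: "PR G p \<Longrightarrow> \<not> is_wit x \<Longrightarrow> \<forall>h\<in>G. x \<notin> fv h \<Longrightarrow> PR G (All x p)"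
  unfolding provable_def by (auto intro!: derives.gen)

lemma pr_henkin: "PR G p \<Longrightarrow> \<forall>h\<in>G. henkin h \<Longrightarrow> henkin p"
  unfolding provable_def using derives_henkin by blast

lemma pr_id: "henkin h \<Longrightarrow> PR G (Imp h h)"
proof -
  assume h: "henkin h"
  have 1: "PR G (Imp (Imp h (Imp (Imp h h) h)) (Imp (Imp h (Imp h h)) (Imp h h)))"
    using h by (intro pr_ax) (auto intro: axiom.intros)
  have 2: "PR G (Imp h (Imp (Imp h h) h))" using h by (intro pr_ax) (auto intro: axiom.intros)
  have 3: "PR G (Imp h (Imp h h))" using h by (intro pr_ax) (auto intro: axiom.intros)
  show ?thesis using pr_mp[OF pr_mp[OF 1 2] 3] .
qed

lemma pr_K: "PR G p \<Longrightarrow> henkin p \<Longrightarrow> henkin h \<Longrightarrow> PR G (Imp h p)"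
  by (rule pr_mp[of _ p]) (auto intro!: pr_ax axiom.intros)

lemma ded_derives: "derives CS H p \<Longrightarrow> \<forall>g\<in>H. henkin g \<Longrightarrow> henkin h \<Longrightarrow> PR (H - {h}) (Imp h p)"
proof (induction rule: derives.induct)
  case (hyp p)
  show ?case
  proof (cases "p = h")
    case True then show ?thesis using hyp by (simp add: pr_id)
  next
    case False then show ?thesis using hyp by (intro pr_K pr_hyp) auto
  qed
next
  case (ax p) then show ?case by (intro pr_K pr_ax) auto
next
  case (cs p) then show ?case by (intro pr_K pr_cs) (auto simp: henkin_CSV)
next
  case (mp H1 p q H2)
  have hq: "henkin (Imp p q)" using mp derives_henkin by blast
  have 1: "PR (H1 \<union> H2 - {h}) (Imp h (Imp p q))" using mp by (auto intro: pr_mono)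
  have 2: "PR (H1 \<union> H2 - {h}) (Imp h p)" using mp by (auto intro: pr_mono)
  have 3: "PR (H1 \<union> H2 - {h}) (Imp (Imp h (Imp p q)) (Imp (Imp h p) (Imp h q)))"
    using hq mp by (intro pr_ax) (auto intro: axiom.intros)
  show ?case using pr_mp[OF pr_mp[OF 3 1] 2] .
next
  case (gen H p x)
  have hp: "henkin p" using gen derives_henkin by blast
  show ?case
  proof (cases "x \<in> fv h")
    case True
    then have "h \<notin> H" using gen by auto
    then have "PR (H - {h}) (All x p)" unfolding provable_def using gen derives.gen by auto
    then show ?thesis using gen hp by (intro pr_K) auto
  next
    case False
    have "PR (H - {h}) (All x (Imp h p))" using gen by (intro pr_gen) auto
    moreover have "PR (H - {h}) (Imp (All x (Imp h p)) (Imp h (All x p)))"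
      using False gen hp by (intro pr_ax) (auto intro: axiom.intros)
    ultimately show ?thesis by (rule pr_mp[rotated])
  qed
qed

lemma pr_ded: "PR (insert h G) p \<Longrightarrow> \<forall>g\<in>G. henkin g \<Longrightarrow> henkin h \<Longrightarrow> PR G (Imp h p)"
proof -
  assume a: "PR (insert h G) p" "\<forall>g\<in>G. henkin g" "henkin h"
  then obtain H where H: "H \<subseteq> insert h G" "derives CS H p" unfolding provable_def by blast
  then have "PR (H - {h}) (Imp h p)" using a by (intro ded_derives) auto
  then show ?thesis using H by (auto intro: pr_mono)
qed

abbreviation Thm where "Thm p \<equiv> PR {} p"

lemma thm_pr: "Thm p \<Longrightarrow> PR G p" by (auto intro: pr_mono)

lemma pr_trans: "PR G (Imp a b) \<Longrightarrow> PR G (Imp b c) \<Longrightarrow> \<forall>g\<in>G. henkin g \<Longrightarrow> henkin a \<Longrightarrow> PR G (Imp a c)"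
proof -
  assume 1: "PR G (Imp a b)" and 2: "PR G (Imp b c)" and g: "\<forall>g\<in>G. henkin g" and ha: "henkin a"
  have "PR (insert a G) c"
    using pr_mp[OF pr_mono[OF 2] pr_mp[OF pr_mono[OF 1] pr_hyp]] by auto
  then show ?thesis using g ha by (intro pr_ded)
qed

lemma pr_DN: "PR G (Neg (Neg p)) \<Longrightarrow> henkin p \<Longrightarrow> PR G p"
  by (rule pr_mp[rotated]) (auto intro!: pr_ax axiom.intros)

lemma pr_inst_self: "PR G (All y p) \<Longrightarrow> henkin (All y p) \<Longrightarrow> PR G p"
proof -
  assume 1: "PR G (All y p)" "henkin (All y p)"
  have "substs (id(y:=y)) p = p" by (simp add: substs_id)
  moreover have "axiom (Imp (All y p) (subst y y p))" by (rule axiom.A1_inst[OF freefor_self])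
  ultimately have "PR G (Imp (All y p) p)" using 1 by (intro pr_ax) (auto simp: subst_def)
  then show ?thesis using 1 pr_mp by blast
qed

end

lemma ffilter_wits[simp]: "ffilter is_wit (wits p) = wits p"
  by (rule fset_eqI) (auto dest: wits_is_wit)

lemma axiom_rename: "axiom p \<Longrightarrow> inj_on r (allvars p) \<Longrightarrow> axiom (rename r p)"
proof (induction rule: axiom.induct)
  case (A1_K p q) then show ?case by (simp add: axiom.A1_K)
next
  case (A1_S p q r') then show ?case by (simp add: axiom.A1_S)
next
  case (A1_DN p) then show ?case by (simp add: axiom.A1_DN)
next
  case (A1_inst x y p)
  show ?case
  proof (cases "x \<in> fv p")
    case True
    have yv: "y \<in> allvars (subst x y p)" using allvars_subst[OF True] by (simp add: subst_def)
    have "insert x (insert y (allvars p)) \<subseteq> allvars (Imp (All x p) (subst x y p))" using yv by auto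
    then have inj: "inj_on r (insert x (insert y (allvars p)))"
      using A1_inst.prems by (rule inj_on_subset[rotated])
    have "rename r (substs (id(x:=y)) p) = substs (id(r x := r y)) (rename r p)"
    proof (rule rename_substs)
      show "inj_on r (allvars p)" using inj by (auto intro: inj_on_subset)
      show "\<forall>v\<in>allvars p. (id(r x := r y)) (r v) = r ((id(x:=y)) v)"
      proof
        fix v assume v: "v \<in> allvars p"
        show "(id(r x := r y)) (r v) = r ((id(x:=y)) v)"
        proof (cases "v = x")
          case False
          then have "r v \<noteq> r x" using inj v by (auto simp: inj_on_def)
          then show ?thesis using False by simp
        qed simp
      qed
    qed
    moreover have "freefor (r x) (r y) (rename r p)" using freefor_rename[OF A1_inst.hyps inj] .
    ultimately show ?thesis using axiom.A1_inst[of "r x" "r y" "rename r p"] by (simp add: subst_def)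
  next
    case False
    have "subst x y p = p" using subst_notfree[OF False] by (simp add: subst_def)
    moreover have "subst (r x) (r x) (rename r p) = rename r p" by (simp add: subst_def substs_id)
    ultimately show ?thesis using axiom.A1_inst[OF freefor_self, of "r x" "rename r p"] by simp
  qed
next
  case (A1_dist x p q)
  have inj: "inj_on r (allvars p)" using A1_dist.prems by (auto intro: inj_on_subset)
  have "r x \<notin> r ` fv p" using A1_dist fv_allvars[of p] by (auto simp: inj_on_def)
  then have "r x \<notin> fv (rename r p)" using fv_rename[OF inj] by simp
  then show ?case by (simp add: axiom.A1_dist)
next
  case (A2 y p t X)
  have inj: "inj_on r (allvars p)" using A2.prems by (auto intro: inj_on_subset)
  have "r y \<notin> r ` fv p" using A2 fv_allvars[of p] by (auto simp: inj_on_def)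
  then have "r y \<notin> fv (rename r p)" using fv_rename[OF inj] by simp
  then show ?case by (simp add: axiom.A2)
next
  case (A3 t X p y) then show ?case by (simp add: axiom.A3)
next
  case (B1 t X p) then show ?case by (simp add: axiom.B1)
next
  case (B2 t X p q s) then show ?case by (simp add: axiom.B2)
next
  case (B3l t X p s) then show ?case by (simp add: axiom.B3l)
next
  case (B3r s X p t) then show ?case by (simp add: axiom.B3r)
next
  case (B4 t X p) then show ?case by (simp add: axiom.B4)
next
  case (B5 x X t p)
  have "r x \<notin> r ` fset X" using B5 by (auto simp: inj_on_def)
  then show ?case by (simp add: axiom.B5)
next
  case (Bb y X t p)
  have "r y \<notin> r ` fset X" using Bb by (auto simp: inj_on_def)
  then show ?case by (simp add: axiom.Bb)
qed

lemma substs_rename_inv: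
  "henkin p \<Longrightarrow> (\<forall>w. w |\<in>| wits p \<longrightarrow> r (\<rho> w) = w \<and> \<rho> w \<notin> allvars p) \<Longrightarrow>
   (\<forall>v\<in>allvars p. \<not> is_wit v \<longrightarrow> \<rho> v = v \<and> r v = v) \<Longrightarrow> substs r (rename \<rho> p) = p"
proof (induction p arbitrary: r)
  case (Pred P xs)
  have "\<forall>v\<in>set xs. r (\<rho> v) = v"
  proof
    fix v assume v: "v \<in> set xs"
    show "r (\<rho> v) = v"
    proof (cases "is_wit v")
      case True
      then have "v |\<in>| wits (Pred P xs)" using v by (simp add: fset_of_list.rep_eq)
      then show ?thesis using Pred.prems(2) by blast
    next
      case False then show ?thesis using Pred.prems(3) v by simp
    qed
  qed
  then show ?case by (simp add: map_idI)
next
  case (Imp p q)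
  show ?case using Imp.prems by (simp add: Imp.IH)
next
  case (All z p)
  have nz: "\<not> is_wit z" using All.prems(1) by simp
  have rz: "\<rho> z = z" using All.prems(3) nz by simp
  have "substs (r(z:=z)) (rename \<rho> p) = p"
  proof (rule All.IH)
    show "henkin p" using All.prems(1) by simp
    show "\<forall>w. w |\<in>| wits p \<longrightarrow> (r(z := z)) (\<rho> w) = w \<and> \<rho> w \<notin> allvars p"
    proof (intro allI impI)
      fix w assume w: "w |\<in>| wits p"
      then have "w |\<in>| wits (All z p)" by simp
      then have "r (\<rho> w) = w" "\<rho> w \<notin> allvars (All z p)" using All.prems(2) by blast+
      then show "(r(z := z)) (\<rho> w) = w \<and> \<rho> w \<notin> allvars p" by auto
    qed
    show "\<forall>v\<in>allvars p. \<not> is_wit v \<longrightarrow> \<rho> v = v \<and> (r(z := z)) v = v"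
      using All.prems(3) by simp
  qed
  then show ?case using rz by simp
next
  case (Just t X p)
  let ?ri = "\<lambda>v. if v |\<in>| \<rho> |`| X then r v else v"
  have ht: "rename_tm \<rho> t = t"
    using Just.prems(1,3) henkin_tm_allvars by (intro rename_tm_id) auto
  have wX: "fset (wits p) \<subseteq> fset X" using Just.prems(1) by (simp add: less_eq_fset.rep_eq)
  have X: "r |`| (\<rho> |`| X) = X"
  proof (rule fset_eqI)
    fix v
    have "\<forall>u. u |\<in>| X \<longrightarrow> r (\<rho> u) = u"
    proof (intro allI impI)
      fix u assume u: "u |\<in>| X"
      show "r (\<rho> u) = u"
      proof (cases "is_wit u")
        case True
        then have "u |\<in>| wits (Just t X p)" using u by simp
        then show ?thesis using Just.prems(2) by blast
      next
        case False then show ?thesis using Just.prems(3) u by simp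
      qed
    qed
    then show "(v |\<in>| r |`| (\<rho> |`| X)) = (v |\<in>| X)" by (auto simp: image_iff)
  qed
  have "substs ?ri (rename \<rho> p) = p"
  proof (rule Just.IH)
    show "henkin p" using Just.prems(1) by simp
    show "\<forall>w. w |\<in>| wits p \<longrightarrow> ?ri (\<rho> w) = w \<and> \<rho> w \<notin> allvars p"
    proof (intro allI impI)
      fix w assume w: "w |\<in>| wits p"
      then have "w |\<in>| wits (Just t X p)" by simp
      then have 1: "r (\<rho> w) = w" "\<rho> w \<notin> allvars (Just t X p)" using Just.prems(2) by blast+
      have "\<rho> w |\<in>| \<rho> |`| X" using w wX by auto
      then show "?ri (\<rho> w) = w \<and> \<rho> w \<notin> allvars p" using 1 by simp
    qed
    show "\<forall>v\<in>allvars p. \<not> is_wit v \<longrightarrow> \<rho> v = v \<and> ?ri v = v"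
      using Just.prems(3) by simp
  qed
  then show ?case using ht X by simp
qed auto

context L begin

lemma henkin_Just_mono: "henkin (Just t X p) \<Longrightarrow> X |\<subseteq>| Y \<Longrightarrow> henkin (Just t Y p)"
  by auto

lemma jsub_add: "henkin (Just t X p) \<Longrightarrow> Thm (Imp (Just t X p) (Just t (X |\<union>| Y) p))"
proof (induction Y rule: fset_induct)
  case empty then show ?case by (simp add: pr_id)
next
  case (insert y Y)
  have 1: "Thm (Imp (Just t (X |\<union>| Y) p) (Just t (finsert y (X |\<union>| Y)) p))"
    using insert.prems by (intro pr_ax) (auto intro: axiom.A3)
  have 0: "Thm (Imp (Just t X p) (Just t (X |\<union>| Y) p))" by (rule insert.IH[OF insert.prems])
  have "Thm (Imp (Just t X p) (Just t (finsert y (X |\<union>| Y)) p))"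
    by (rule pr_trans[OF 0 1]) (use insert.prems in simp_all)
  then show ?case by simp
qed

lemma jsub_rem: "henkin (Just t Y p) \<Longrightarrow> fset D \<inter> fv p = {} \<Longrightarrow> Thm (Imp (Just t (Y |\<union>| D) p) (Just t Y p))"
proof (induction D rule: fset_induct)
  case empty then show ?case by (simp add: pr_id)
next
  case (insert d D)
  have 1: "Thm (Imp (Just t (finsert d (Y |\<union>| D)) p) (Just t (Y |\<union>| D) p))"
    using insert.prems by (intro pr_ax) (auto intro: axiom.A2)
  have 0: "Thm (Imp (Just t (Y |\<union>| D) p) (Just t Y p))"
    by (rule insert.IH[OF insert.prems(1)]) (use insert.prems(2) in auto)
  have "Thm (Imp (Just t (finsert d (Y |\<union>| D)) p) (Just t Y p))"
    by (rule pr_trans[OF 1 0]) (use insert.prems in auto)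
  then show ?case by simp
qed

lemma jsub: "henkin (Just t X p) \<Longrightarrow> wits p |\<subseteq>| Y \<Longrightarrow> fset X \<inter> fv p \<subseteq> fset Y \<Longrightarrow>
  Thm (Imp (Just t X p) (Just t Y p))"
proof -
  assume h: "henkin (Just t X p)" and w: "wits p |\<subseteq>| Y" and f: "fset X \<inter> fv p \<subseteq> fset Y"
  have 1: "Thm (Imp (Just t X p) (Just t (X |\<union>| Y) p))" by (rule jsub_add[OF h])
  have hY: "henkin (Just t Y p)" using h w by simp
  have "fset (X |-| Y) \<inter> fv p = {}" using f by auto
  then have 2: "Thm (Imp (Just t (Y |\<union>| (X |-| Y)) p) (Just t Y p))" by (rule jsub_rem[OF hY])
  have "Y |\<union>| (X |-| Y) = X |\<union>| Y" by auto
  then have 3: "Thm (Imp (Just t (X |\<union>| Y) p) (Just t Y p))" using 2 by simp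
  show ?thesis by (rule pr_trans[OF 1 3]) (use h in auto)
qed

lemma jsub_thm: "Thm (Just t X p) \<Longrightarrow> wits p |\<subseteq>| Y \<Longrightarrow> fset X \<inter> fv p \<subseteq> fset Y \<Longrightarrow> Thm (Just t Y p)"
proof -
  assume a: "Thm (Just t X p)" "wits p |\<subseteq>| Y" "fset X \<inter> fv p \<subseteq> fset Y"
  have "henkin (Just t X p)" using pr_henkin[OF a(1)] by simp
  then have "Thm (Imp (Just t X p) (Just t Y p))" using a(2,3) by (rule jsub)
  then show ?thesis using a(1) by (rule pr_mp)
qed

lemma all_mono: "Thm (Imp P Q) \<Longrightarrow> henkin P \<Longrightarrow> henkin Q \<Longrightarrow> \<not> is_wit y \<Longrightarrow> Thm (Imp (All y P) (All y Q))"
proof -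
  assume 1: "Thm (Imp P Q)" and hP: "henkin P" and hQ: "henkin Q" and y: "\<not> is_wit y"
  have "PR {All y P} P" by (rule pr_inst_self[OF pr_hyp]) (use hP y in auto)
  then have "PR {All y P} Q" using pr_mp thm_pr[OF 1] by blast
  then have "PR {All y P} (All y Q)" using y by (intro pr_gen) auto
  then show ?thesis using hP y by (intro pr_ded) auto
qed

lemma ax_CSV: "axiom A \<Longrightarrow> henkin A \<Longrightarrow> \<exists>c. Just (JC c) (wits A) A \<in> CSV CS"
proof -
  assume axA: "axiom A" and hA: "henkin A"
  have "{n. BV n \<in> allvars A} = BV -` allvars A" by auto
  moreover have "finite (BV -` allvars A)" by (rule finite_vimageI) (auto simp: inj_on_def)
  ultimately have "finite {n. BV n \<in> allvars A}" by simp
  then obtain N where N: "\<And>n. BV n \<in> allvars A \<Longrightarrow> n < N"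
    using finite_nat_set_iff_bounded by auto
  define \<rho> where "\<rho> = (\<lambda>v. case v of BV m \<Rightarrow> BV m | WV n \<Rightarrow> BV (N + n))"
  define r where "r = (\<lambda>v. case v of BV m \<Rightarrow> (if N \<le> m \<and> WV (m - N) |\<in>| wits A then WV (m - N) else BV m) | WV n \<Rightarrow> WV n)"
  have injr: "inj_on \<rho> (allvars A)"
  proof (rule inj_onI)
    fix u v assume u: "u \<in> allvars A" and v: "v \<in> allvars A" and e: "\<rho> u = \<rho> v"
    show "u = v"
    proof (cases u; cases v)
      fix m n assume "u = BV m" "v = WV n" then show ?thesis using e u N by (auto simp: \<rho>_def)
    next
      fix m n assume "u = WV m" "v = BV n" then show ?thesis using e v N by (auto simp: \<rho>_def)
    qed (use e in \<open>auto simp: \<rho>_def\<close>)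
  qed
  define A0 where "A0 = rename \<rho> A"
  have ax0: "axiom A0" unfolding A0_def by (rule axiom_rename[OF axA injr])
  have sub: "fset (wits A0) \<subseteq> \<rho> ` fset (wits A)" unfolding A0_def
    by (rule wits_rename) (auto simp: \<rho>_def split: var.splits)
  have rb: "\<And>w. \<not> is_wit (\<rho> w)" by (auto simp: \<rho>_def split: var.splits)
  have "\<And>v. v |\<notin>| wits A0"
  proof
    fix v assume v: "v |\<in>| wits A0"
    then have "v \<in> \<rho> ` fset (wits A)" using sub by blast
    then obtain w where "v = \<rho> w" by blast
    then have "\<not> is_wit v" using rb by simp
    moreover have "is_wit v" using wits_is_wit v by blast
    ultimately show False by simp
  qed
  then have "wits A0 = {||}" by (intro fset_eqI) auto
  then have b0: "basic A0" by (simp add: basic_def)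
  then obtain c where c: "Just (JC c) {||} A0 \<in> CS" using aa ax0 unfolding axiomatically_appropriate_def by blast
  have inv: "substs r A0 = A" unfolding A0_def
  proof (rule substs_rename_inv[OF hA])
    show "\<forall>w. w |\<in>| wits A \<longrightarrow> r (\<rho> w) = w \<and> \<rho> w \<notin> allvars A"
    proof (intro allI impI)
      fix w assume w: "w |\<in>| wits A"
      have "is_wit w" using wits_is_wit[OF w] .
      then obtain n where n: "w = WV n" by (cases w) auto
      show "r (\<rho> w) = w \<and> \<rho> w \<notin> allvars A" using w n N by (auto simp: \<rho>_def r_def)
    qed
    show "\<forall>v\<in>allvars A. \<not> is_wit v \<longrightarrow> \<rho> v = v \<and> r v = v"
    proof (intro ballI impI)
      fix v assume v: "v \<in> allvars A" "\<not> is_wit v"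
      then obtain m where m: "v = BV m" by (cases v) auto
      then show "\<rho> v = v \<and> r v = v" using N[of m] v by (auto simp: \<rho>_def r_def)
    qed
  qed
  have fv0: "fv A0 = \<rho> ` fv A" unfolding A0_def by (rule fv_rename[OF injr])
  have rc: "\<forall>v. r v \<noteq> v \<longrightarrow> v \<in> fv A0 \<and> \<not> is_wit v \<and> is_wit (r v)"
  proof (intro allI impI)
    fix v assume rv: "r v \<noteq> v"
    then obtain m where m: "v = BV m" "N \<le> m" "WV (m - N) |\<in>| wits A"
      by (cases v) (auto simp: r_def split: if_splits)
    then have "WV (m - N) \<in> fv A" using henkin_wits_fv[OF hA] by blast
    then have "\<rho> (WV (m - N)) \<in> fv A0" using fv0 by blast
    moreover have "\<rho> (WV (m - N)) = v" using m by (simp add: \<rho>_def)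
    ultimately show "v \<in> fv A0 \<and> \<not> is_wit v \<and> is_wit (r v)" using m by (simp add: r_def)
  qed
  have ri: "inj_on r {v. r v \<noteq> v}"
  proof (rule inj_onI)
    fix u v assume u: "u \<in> {v. r v \<noteq> v}" and v: "v \<in> {v. r v \<noteq> v}" and e: "r u = r v"
    obtain m where m: "u = BV m" "N \<le> m" "WV (m - N) |\<in>| wits A"
      using u by (cases u) (auto simp: r_def split: if_splits)
    obtain m' where m': "v = BV m'" "N \<le> m'" "WV (m' - N) |\<in>| wits A"
      using v by (cases v) (auto simp: r_def split: if_splits)
    show "u = v" using e m m' by (simp add: r_def)
  qed
  have "Just (JC c) (wits A) A \<in> CSV CS" unfolding CSV_def mem_Collect_eq
    by (intro exI[of _ c] exI[of _ A0] exI[of _ A] conjI refl c exI[of _ r] rc ri) (simp add: inv)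
  then show ?thesis by blast
qed

lemma internalize_derives: "derives CS H A \<Longrightarrow> H = {} \<Longrightarrow> \<exists>t. henkin_tm t \<and> Thm (Just t (wits A) A)"
proof (induction rule: derives.induct)
  case (hyp p) then show ?case by simp
next
  case (ax p)
  then obtain c where "Just (JC c) (wits p) p \<in> CSV CS" using ax_CSV by blast
  then show ?case by (intro exI[of _ "JC c"]) (auto intro: pr_cs)
next
  case (cs p)
  then obtain c A B r where p: "p = Just (JC c) (wits B) B"
    unfolding CSV_def by blast
  have hp: "henkin p" using henkin_CSV[OF cs.hyps] .
  have wp: "wits p = wits B" using p by simp
  have "Thm (Imp p (Just (JBang (JC c)) (wits B) p))"
    using hp p by (intro pr_ax) (auto intro: axiom.B4)
  then have "Thm (Just (JBang (JC c)) (wits B) p)" using pr_mp[OF _ pr_cs[OF cs.hyps]] by blast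
  then have "Thm (Just (JBang (JC c)) (wits p) p)" using wp by simp
  then show ?case by (intro exI[of _ "JBang (JC c)"]) simp
next
  case (mp H1 p q H2)
  then have e: "H1 = {}" "H2 = {}" by auto
  obtain t1 where t1: "henkin_tm t1" "Thm (Just t1 (wits (Imp p q)) (Imp p q))" using mp e by blast
  obtain t2 where t2: "henkin_tm t2" "Thm (Just t2 (wits p) p)" using mp e by blast
  have hpq: "henkin (Imp p q)" using mp.hyps(1) e derives_henkin by blast
  let ?X = "wits p |\<union>| wits q"
  have 2: "Thm (Just t2 ?X p)" using t2(2) by (rule jsub_thm) auto
  have 1: "Thm (Just t1 ?X (Imp p q))" using t1(2) by simp
  have "Thm (Imp (Just t1 ?X (Imp p q)) (Imp (Just t2 ?X p) (Just (JApp t1 t2) ?X q)))"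
    using t1 t2 hpq by (intro pr_ax) (auto intro: axiom.B2)
  then have 3: "Thm (Just (JApp t1 t2) ?X q)" using pr_mp[OF pr_mp[OF _ 1] 2] by blast
  have "fset ?X \<inter> fv q \<subseteq> fset (wits q)" using fv_wits wits_is_wit by auto
  then have "Thm (Just (JApp t1 t2) (wits q) q)" by (rule jsub_thm[OF 3, rotated]) simp
  then show ?case using t1 t2 by (intro exI[of _ "JApp t1 t2"]) simp
next
  case (gen H p x)
  obtain t where t: "henkin_tm t" "Thm (Just t (wits p) p)" using gen by blast
  have hp: "henkin p" using gen derives_henkin by blast
  have xn: "x |\<notin>| wits p" using gen.hyps(2) wits_is_wit by blast
  have "Thm (Imp (Just t (wits p) p) (Just (JGen x t) (wits p) (All x p)))"
    using t hp gen.hyps(2) xn by (intro pr_ax) (auto intro: axiom.B5)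
  then have "Thm (Just (JGen x t) (wits p) (All x p))" using pr_mp[OF _ t(2)] by blast
  moreover have "wits (All x p) = wits p" using gen.hyps(2) by auto
  ultimately show ?case using t gen.hyps(2) by (intro exI[of _ "JGen x t"]) simp
qed

lemma internalize: "Thm A \<Longrightarrow> \<exists>t. henkin_tm t \<and> Thm (Just t (wits A) A)"
proof -
  assume "Thm A"
  then obtain H where "H \<subseteq> {}" "derives CS H A" unfolding provable_def by blast
  then show ?thesis using internalize_derives by blast
qed

end

lemma inst_cong: "(\<forall>i\<in>set (letters G). \<chi>1 i = \<chi>2 i) \<Longrightarrow> inst \<chi>1 G = inst \<chi>2 G"
  by (induction G) auto

lemma wits_inst: "p \<in> inst \<chi> G \<Longrightarrow> fset (wits p) = (\<Union>i\<in>set (letters G). fset (wits (\<chi> i)))"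
proof (induction G arbitrary: p)
  case (TL i) then show ?case by simp
next
  case (TNeg G) then show ?case by auto
next
  case (TOr G H)
  then obtain g h where "p = Or g h" "g \<in> inst \<chi> G" "h \<in> inst \<chi> H" by auto
  then show ?case using TOr.IH by auto
next
  case (TAnd G H)
  then obtain g h where "p = And g h" "g \<in> inst \<chi> G" "h \<in> inst \<chi> H" by auto
  then show ?case using TAnd.IH by (auto simp: And_def Neg_def)
next
  case (TBox G)
  then obtain t g where "p = Just t (wits g) g" "henkin_tm t" "g \<in> inst \<chi> G" by auto
  then show ?case using TBox.IH by (auto simp: henkin_tm_witst)
qed

lemma wits_inst_eq: "p1 \<in> inst \<chi> G \<Longrightarrow> p2 \<in> inst \<chi> G \<Longrightarrow> wits p1 = wits p2"
  using wits_inst by (metis fset_inject)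

lemma fv_inst: "p \<in> inst \<chi> G \<Longrightarrow> fv p \<subseteq> (\<Union>i\<in>set (letters G). allvars (\<chi> i))"
proof (induction G arbitrary: p)
  case (TL i) then show ?case using fv_allvars by auto
next
  case (TNeg G)
  then obtain g where "p = Neg g" "g \<in> inst \<chi> G" by auto
  then show ?case using TNeg.IH by auto
next
  case (TOr G H)
  then obtain g h where "p = Or g h" "g \<in> inst \<chi> G" "h \<in> inst \<chi> H" by auto
  then show ?case using TOr.IH by auto
next
  case (TAnd G H)
  then obtain g h where "p = And g h" "g \<in> inst \<chi> G" "h \<in> inst \<chi> H" by auto
  then show ?case using TAnd.IH by (auto simp: And_def Neg_def)
next
  case (TBox G)
  then obtain t g where g: "p = Just t (wits g) g" "g \<in> inst \<chi> G" by auto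
  have "fset (wits g) \<subseteq> (\<Union>i\<in>set (letters G). allvars (\<chi> i))"
    using wits_inst[OF g(2)] wits_allvars wits_is_wit by fastforce
  then show ?case using g by simp
qed

lemma henkin_inst: "(\<forall>i\<in>set (letters G). henkin (\<chi> i)) \<Longrightarrow> p \<in> inst \<chi> G \<Longrightarrow> henkin p"
proof (induction G arbitrary: p)
  case (TAnd G H)
  then show ?case by (auto simp: And_def)
qed auto

lemma wit_notin_inst: "is_wit a \<Longrightarrow> (\<forall>i\<in>set (letters G). a \<notin> allvars (\<chi> i)) \<Longrightarrow> p \<in> inst \<chi> G \<Longrightarrow> a \<notin> allvars p"
proof
  assume a: "is_wit a" "\<forall>i\<in>set (letters G). a \<notin> allvars (\<chi> i)" "p \<in> inst \<chi> G" "a \<in> allvars p"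
  then have "a |\<in>| wits p" using wits_allvars by blast
  then obtain i where "i \<in> set (letters G)" "a |\<in>| wits (\<chi> i)" using wits_inst[OF a(3)] by auto
  then show False using a wits_allvars by blast
qed

lemma alpha1: "y \<notin> allvars p \<Longrightarrow> substs (id(y:=x)) (substs (id(x:=y)) p) = p"
proof (induction p)
  case (Pred P xs) then show ?case by (auto intro: map_idI)
next
  case (All z p)
  show ?case
  proof (cases "z = x")
    case True
    then have "substs (id(y:=x)) (substs (id(x:=y)) (All z p)) = All z (substs ((id(y:=x))(x:=x)) p)"
      by (simp add: substs_id)
    also have "substs ((id(y:=x))(x:=x)) p = p" using All.prems by (intro substs_id) auto
    finally show ?thesis .
  next
    case False
    have "z \<noteq> y" using All.prems by auto
    have e1: "(id(x:=y))(z:=z) = id(x:=y)" using False by auto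
    have e2: "(id(y:=x))(z:=z) = id(y:=x)" using \<open>z \<noteq> y\<close> by auto
    have "substs (id(y:=x)) (substs (id(x:=y)) p) = p" by (rule All.IH) (use All.prems in auto)
    then show ?thesis by (simp only: substs.simps e1 e2)
  qed
next
  case (Just t X p)
  show ?case
  proof (cases "x |\<in>| X")
    case True
    have yX: "y |\<notin>| X" using Just.prems by auto
    have f1: "(\<lambda>v. if v |\<in>| X then (id(x:=y)) v else v) = id(x:=y)" using True by (intro ext) auto
    have f2: "(\<lambda>v. if v |\<in>| id(x:=y) |`| X then (id(y:=x)) v else v) = id(y:=x)"
      using True by (auto simp: fun_eq_iff)
    have X3: "id(y:=x) |`| (id(x:=y) |`| X) = X" using True yX by (auto simp: fimage_iff fset_eq_iff)
    have "substs (id(y:=x)) (substs (id(x:=y)) p) = p" by (rule Just.IH) (use Just.prems in auto)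
    then show ?thesis using f1 f2 X3 by (simp only: substs.simps)
  next
    case False
    have yX: "y |\<notin>| X" using Just.prems by auto
    have f1: "(\<lambda>v. if v |\<in>| X then (id(x:=y)) v else v) = id" using False by auto
    have X1: "id(x:=y) |`| X = X" using False by (auto simp: fset_eq_iff fimage_iff) 
    have f2: "(\<lambda>v. if v |\<in>| X then (id(y:=x)) v else v) = id" using yX by auto
    have X2: "id(y:=x) |`| X = X" using yX by (auto simp: fset_eq_iff fimage_iff)
    have "substs id p = p" by (simp add: substs_id)
    then show ?thesis using f1 f2 X1 X2 by (simp only: substs.simps)
  qed
qed auto

lemma fv_subst_gone: "x \<noteq> y \<Longrightarrow> x \<notin> fv (substs (id(x:=y)) p)"
  using fv_substs[of "id(x:=y)" p] by auto

lemma alpha2: "y \<notin> allvars p \<Longrightarrow> x \<noteq> y \<Longrightarrow> freefor y x (substs (id(x:=y)) p)"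
proof (induction p)
  case (All z p)
  show ?case
  proof (cases "z = x")
    case True
    have e: "(id(x:=y))(z:=z) = id" using True by auto
    have "substs (id(x:=y)) (All z p) = All z (substs id p)" by (simp only: substs.simps e)
    also have "\<dots> = All z p" by (simp add: substs_id)
    finally have eq: "substs (id(x:=y)) (All z p) = All z p" .
    show ?thesis unfolding eq using True All.prems fv_allvars[of p] by auto
  next
    case False
    have e1: "(id(x:=y))(z:=z) = id(x:=y)" using False by auto
    have "freefor y x (substs (id(x:=y)) p)" by (rule All.IH) (use All.prems in auto)
    then have "freefor y x (All z (substs (id(x:=y)) p))" using False by simp
    then show ?thesis by (simp only: substs.simps e1)
  qed
next
  case (Just t X p)
  show ?case
  proof (cases "x |\<in>| X")
    case True
    have f1: "(\<lambda>v. if v |\<in>| X then (id(x:=y)) v else v) = id(x:=y)" using True by (intro ext) auto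
    have "freefor y x (substs (id(x:=y)) p)" by (rule Just.IH) (use Just.prems in auto)
    moreover have "x \<notin> fv (substs (id(x:=y)) p)" using fv_subst_gone Just.prems by blast
    ultimately have "freefor y x (Just t (id(x:=y) |`| X) (substs (id(x:=y)) p))" by simp
    then show ?thesis using f1 by (simp only: substs.simps)
  next
    case False
    have yX: "y |\<notin>| X" using Just.prems by auto
    have f1: "(\<lambda>v. if v |\<in>| X then (id(x:=y)) v else v) = id" using False by auto
    have X1: "id(x:=y) |`| X = X" using False by (auto simp: fset_eq_iff fimage_iff)
    have "freefor y x (Just t X (substs id p))" using yX by simp
    then show ?thesis using f1 X1 by (simp only: substs.simps)
  qed
qed auto

context L begin

lemma or_mono:
  assumes "Thm (Imp g1 g)" "Thm (Imp h1 h)" "henkin g1" "henkin g" "henkin h1" "henkin h"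
  shows "Thm (Imp (Or g1 h1) (Or g h))"
proof -
  let ?G = "{Neg g, Or g1 h1}"
  have hG: "\<forall>f\<in>?G. henkin f" using assms by simp
  have 1: "PR (insert g1 ?G) g1" by (rule pr_hyp) simp
  have 2: "PR (insert g1 ?G) g" by (rule pr_mp[OF thm_pr[OF assms(1)] 1])
  have 3: "PR (insert g1 ?G) (Imp g Bot)" by (rule pr_hyp) (simp add: Neg_def)
  have 4: "PR (insert g1 ?G) Bot" by (rule pr_mp[OF 3 2])
  have 5: "PR ?G (Neg g1)" unfolding Neg_def[of g1] by (rule pr_ded[OF 4 hG assms(3)])
  have 6: "PR ?G (Imp (Neg g1) h1)" by (rule pr_hyp) (simp add: Or_def)
  have 7: "PR ?G h" using pr_mp[OF thm_pr[OF assms(2)] pr_mp[OF 6 5]] .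
  have 8: "PR {Or g1 h1} (Or g h)" unfolding Or_def[of g h] by (rule pr_ded[OF 7]) (use assms in simp_all)
  show ?thesis by (rule pr_ded[OF 8]) (use assms in simp_all)
qed

lemma merge2: "disjunctive G \<Longrightarrow> (\<forall>i\<in>set (letters G). henkin (\<chi> i)) \<Longrightarrow> p1 \<in> inst \<chi> G \<Longrightarrow> p2 \<in> inst \<chi> G \<Longrightarrow>
   \<exists>p\<in>inst \<chi> G. Thm (Imp p1 p) \<and> Thm (Imp p2 p)"
proof (induction G arbitrary: p1 p2)
  case (TL i) then show ?case by (auto intro!: pr_id)
next
  case (TOr G H)
  obtain g1 h1 where 1: "p1 = Or g1 h1" "g1 \<in> inst \<chi> G" "h1 \<in> inst \<chi> H" using TOr.prems(3) by auto
  obtain g2 h2 where 2: "p2 = Or g2 h2" "g2 \<in> inst \<chi> G" "h2 \<in> inst \<chi> H" using TOr.prems(4) by auto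
  have hG: "\<forall>i\<in>set (letters G). henkin (\<chi> i)" and hH: "\<forall>i\<in>set (letters H). henkin (\<chi> i)"
    using TOr.prems(2) by auto
  have dG: "disjunctive G" and dH: "disjunctive H" using TOr.prems(1) by auto
  obtain g where g: "g \<in> inst \<chi> G" "Thm (Imp g1 g)" "Thm (Imp g2 g)" using TOr.IH(1)[OF dG hG 1(2) 2(2)] by blast
  obtain h where h: "h \<in> inst \<chi> H" "Thm (Imp h1 h)" "Thm (Imp h2 h)" using TOr.IH(2)[OF dH hH 1(3) 2(3)] by blast
  have hs: "henkin g1" "henkin g2" "henkin g" "henkin h1" "henkin h2" "henkin h"
    using henkin_inst[OF hG] henkin_inst[OF hH] 1 2 g h by blast+
  have "Or g h \<in> inst \<chi> (TOr G H)" using g h by auto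
  moreover have "Thm (Imp p1 (Or g h))" unfolding 1 by (rule or_mono) (use g h hs in auto)
  moreover have "Thm (Imp p2 (Or g h))" unfolding 2 by (rule or_mono) (use g h hs in auto)
  ultimately show ?case by blast
next
  case (TBox G)
  obtain t1 q1 where 1: "p1 = Just t1 (wits q1) q1" "henkin_tm t1" "q1 \<in> inst \<chi> G" using TBox.prems(3) by auto
  obtain t2 q2 where 2: "p2 = Just t2 (wits q2) q2" "henkin_tm t2" "q2 \<in> inst \<chi> G" using TBox.prems(4) by auto
  have hG: "\<forall>i\<in>set (letters G). henkin (\<chi> i)" using TBox.prems(2) by auto
  have dG: "disjunctive G" using TBox.prems(1) by auto
  obtain q where q: "q \<in> inst \<chi> G" "Thm (Imp q1 q)" "Thm (Imp q2 q)" using TBox.IH[OF dG hG 1(3) 2(3)] by blast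
  have hs: "henkin q1" "henkin q2" "henkin q" using henkin_inst[OF hG] 1 2 q by blast+
  let ?W = "wits q"
  have w1: "wits q1 = ?W" and w2: "wits q2 = ?W" using wits_inst_eq 1(3) 2(3) q(1) by blast+
  obtain s1 where s1: "henkin_tm s1" "Thm (Just s1 (wits (Imp q1 q)) (Imp q1 q))" using internalize[OF q(2)] by blast
  obtain s2 where s2: "henkin_tm s2" "Thm (Just s2 (wits (Imp q2 q)) (Imp q2 q))" using internalize[OF q(3)] by blast
  have s1': "Thm (Just s1 ?W (Imp q1 q))" using s1(2) w1 by simp
  have s2': "Thm (Just s2 ?W (Imp q2 q))" using s2(2) w2 by simp
  let ?T = "JSum (JApp s1 t1) (JApp s2 t2)"
  have b1: "Thm (Imp (Just s1 ?W (Imp q1 q)) (Imp (Just t1 ?W q1) (Just (JApp s1 t1) ?W q)))"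
    using s1 1 hs w1 by (intro pr_ax) (auto intro: axiom.B2)
  have c1: "Thm (Imp (Just t1 ?W q1) (Just (JApp s1 t1) ?W q))" by (rule pr_mp[OF b1 s1'])
  have d1: "Thm (Imp (Just (JApp s1 t1) ?W q) (Just ?T ?W q))"
    using s1 s2 1 2 hs by (intro pr_ax) (auto intro: axiom.B3l)
  have e1: "Thm (Imp (Just t1 ?W q1) (Just ?T ?W q))" by (rule pr_trans[OF c1 d1]) (use 1 hs w1 in auto)
  have b2: "Thm (Imp (Just s2 ?W (Imp q2 q)) (Imp (Just t2 ?W q2) (Just (JApp s2 t2) ?W q)))"
    using s2 2 hs w2 by (intro pr_ax) (auto intro: axiom.B2)
  have c2: "Thm (Imp (Just t2 ?W q2) (Just (JApp s2 t2) ?W q))" by (rule pr_mp[OF b2 s2'])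
  have d2: "Thm (Imp (Just (JApp s2 t2) ?W q) (Just ?T ?W q))"
    using s1 s2 1 2 hs by (intro pr_ax) (auto intro: axiom.B3r)
  have e2: "Thm (Imp (Just t2 ?W q2) (Just ?T ?W q))" by (rule pr_trans[OF c2 d2]) (use 2 hs w2 in auto)
  have "Just ?T ?W q \<in> inst \<chi> (TBox G)" using q(1) s1 s2 1 2 by auto
  moreover have "Thm (Imp p1 (Just ?T ?W q))" using e1 1 w1 by simp
  moreover have "Thm (Imp p2 (Just ?T ?W q))" using e2 2 w2 by simp
  ultimately show ?case by blast
qed simp_all

lemma mergeN: "finite S \<Longrightarrow> S \<noteq> {} \<Longrightarrow> S \<subseteq> inst \<chi> G \<Longrightarrow> disjunctive G \<Longrightarrow> (\<forall>i\<in>set (letters G). henkin (\<chi> i)) \<Longrightarrow>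
   \<exists>p\<in>inst \<chi> G. \<forall>s\<in>S. Thm (Imp s p)"
proof (induction S rule: finite_ne_induct)
  case (singleton x)
  then have "henkin x" using henkin_inst by blast
  then show ?case using singleton by (intro bexI[of _ x]) (auto intro!: pr_id)
next
  case (insert x S)
  obtain p where p: "p \<in> inst \<chi> G" "\<forall>s\<in>S. Thm (Imp s p)" using insert by auto
  have xi: "x \<in> inst \<chi> G" using insert.prems by auto
  obtain p' where p': "p' \<in> inst \<chi> G" "Thm (Imp x p')" "Thm (Imp p p')"
    using merge2[OF insert.prems(2,3) xi p(1)] by blast
  have "\<forall>s\<in>insert x S. Thm (Imp s p')"
  proof
    fix s assume s: "s \<in> insert x S"
    show "Thm (Imp s p')"
    proof (cases "s = x")
      case True then show ?thesis using p' by simp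
    next
      case False
      then have "s \<in> S" using s by simp
      then have "henkin s" using insert.prems henkin_inst by blast
      then show ?thesis using pr_trans[OF bspec[OF p(2) \<open>s \<in> S\<close>] p'(3)] by simp
    qed
  qed
  then show ?case using p' by blast
qed

lemma alpha_thm:
  assumes h: "henkin (All x \<phi>)" and y: "y \<notin> allvars \<phi>" "y \<noteq> x" "\<not> is_wit y"
  shows "Thm (Imp (All y (subst x y \<phi>)) (All x \<phi>))"
proof -
  let ?P = "subst x y \<phi>"
  have xw: "\<not> is_wit x" using h by simp
  have hP: "henkin ?P" using h xw unfolding subst_def by (intro henkin_substs) auto
  have ff: "freefor y x ?P" unfolding subst_def using alpha2[OF y(1)] y(2) by auto
  have e: "subst y x ?P = \<phi>" unfolding subst_def using alpha1[OF y(1)] .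
  have ax: "axiom (Imp (All y ?P) (subst y x ?P))" by (rule axiom.A1_inst[OF ff])
  have "PR {All y ?P} (Imp (All y ?P) \<phi>)" using pr_ax[OF ax] e hP h y by simp
  then have 1: "PR {All y ?P} \<phi>" using pr_mp pr_hyp by blast
  have "x \<notin> fv ?P" unfolding subst_def using fv_subst_gone y(2) by metis
  then have "PR {All y ?P} (All x \<phi>)" using xw by (intro pr_gen[OF 1]) auto
  then show ?thesis using hP y by (intro pr_ded) auto
qed

lemma or_left:
  assumes 1: "Thm (Imp (All y A) A')" and h: "henkin A" "henkin A'" "henkin B" and y: "\<not> is_wit y" "y \<notin> fv B"
  shows "Thm (Imp (All y (Or A B)) (Or A' B))"
proof -
  let ?U = "All y (Or A B)"
  have hU: "henkin ?U" using h y by simp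
  let ?G1 = "{Neg B, ?U}"
  have hG1: "\<forall>f\<in>?G1. henkin f" using h hU by simp
  have c1: "PR (insert (Neg A) ?G1) (Imp (Neg A) B)"
    using pr_inst_self[OF pr_hyp[of ?U] hU] unfolding Or_def by simp
  have c2: "PR (insert (Neg A) ?G1) B" using pr_mp[OF c1 pr_hyp[of "Neg A"]] by simp
  have c3: "PR (insert (Neg A) ?G1) Bot" using pr_mp[OF pr_hyp[of "Imp B Bot"] c2] by (simp add: Neg_def)
  have c4: "PR ?G1 (Neg (Neg A))" unfolding Neg_def[of "Neg A"] by (rule pr_ded[OF c3 hG1]) (use h in simp)
  have c5: "PR ?G1 A" by (rule pr_DN[OF c4 h(1)])
  have c6: "PR ?G1 (All y A)" by (rule pr_gen[OF c5 y(1)]) (use y in simp)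
  have c7: "PR ?G1 A'" by (rule pr_mp[OF thm_pr[OF 1] c6])
  let ?G2 = "{Neg A', ?U}"
  have c8: "PR (insert (Neg B) ?G2) A'" by (rule pr_mono[OF c7]) auto
  have c9: "PR (insert (Neg B) ?G2) Bot" using pr_mp[OF pr_hyp[of "Imp A' Bot"] c8] by (simp add: Neg_def)
  have c10: "PR ?G2 (Neg (Neg B))" unfolding Neg_def[of "Neg B"] by (rule pr_ded[OF c9]) (use h hU in simp_all)
  have c11: "PR ?G2 B" by (rule pr_DN[OF c10 h(3)])
  have c12: "PR {?U} (Or A' B)" unfolding Or_def[of A' B] by (rule pr_ded[OF c11]) (use h hU in simp_all)
  show ?thesis by (rule pr_ded[OF c12]) (use hU in simp_all)
qed

lemma or_right:
  assumes 1: "Thm (Imp (All y B) B')" and h: "henkin A" "henkin B" "henkin B'" and y: "\<not> is_wit y" "y \<notin> fv A"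
  shows "Thm (Imp (All y (Or A B)) (Or A B'))"
proof -
  have a: "Thm (Imp (All y (Imp (Neg A) B)) (Imp (Neg A) (All y B)))"
    using h y by (intro pr_ax) (auto intro: axiom.A1_dist)
  let ?G = "{Neg A, Imp (Neg A) (All y B)}"
  have c1: "PR ?G (All y B)" using pr_mp[OF pr_hyp[of "Imp (Neg A) (All y B)"] pr_hyp[of "Neg A"]] by simp
  have c2: "PR ?G B'" by (rule pr_mp[OF thm_pr[OF 1] c1])
  have c3: "PR {Imp (Neg A) (All y B)} (Imp (Neg A) B')" by (rule pr_ded[OF c2]) (use h y in simp_all)
  have c4: "Thm (Imp (Imp (Neg A) (All y B)) (Imp (Neg A) B'))" by (rule pr_ded[OF c3]) (use h y in simp_all)
  show ?thesis unfolding Or_def by (rule pr_trans[OF a c4]) (use h y in simp_all)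
qed

end

lemma ren_sub: "a \<notin> allvars \<phi> \<Longrightarrow> rename (id(a:=y)) (subst x a \<phi>) = subst x y \<phi>"
proof -
  assume a: "a \<notin> allvars \<phi>"
  have inj: "inj_on (id(a:=y)) (allvars \<phi>)" using a by (auto simp: inj_on_def)
  have "rename (id(a:=y)) (substs (id(x:=a)) \<phi>) = substs (id(x:=y)) (rename (id(a:=y)) \<phi>)"
  proof (rule rename_substs[OF inj])
    show "\<forall>v\<in>allvars \<phi>. (id(x:=y)) ((id(a:=y)) v) = (id(a:=y)) ((id(x:=a)) v)"
      using a by auto
  qed
  moreover have "rename (id(a:=y)) \<phi> = \<phi>" using a by (intro rename_id) auto
  ultimately show ?thesis by (simp add: subst_def)
qed

context L begin

lemma fin:
  assumes hx: "henkin (All x \<phi>)" and a\<phi>: "a \<notin> allvars \<phi>" and y\<phi>: "y \<notin> allvars \<phi>" and yx: "y \<noteq> x"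
    and yw: "\<not> is_wit y" and aw: "is_wit a"
  shows "disjunctive G \<Longrightarrow> distinct (letters G) \<Longrightarrow>
    (\<forall>i\<in>set (letters G). i \<noteq> q \<longrightarrow> henkin (\<chi> i) \<and> a \<notin> allvars (\<chi> i) \<and> y \<notin> allvars (\<chi> i)) \<Longrightarrow>
    \<psi> \<in> inst (\<chi>(q := subst x a \<phi>)) G \<Longrightarrow>
    \<exists>\<psi>'\<in>inst (\<chi>(q := All x \<phi>)) G. Thm (Imp (All y (rename (id(a:=y)) \<psi>)) \<psi>')"
proof -
  let ?ca = "\<chi>(q := subst x a \<phi>)"
  let ?cf = "\<chi>(q := All x \<phi>)"
  let ?r = "id(a:=y)"
  have xw: "\<not> is_wit x" using hx by simp
  have hsub: "henkin (subst x a \<phi>)" using hx xw unfolding subst_def by (intro henkin_substs) auto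
  have rnw: "\<forall>v. \<not> is_wit v \<longrightarrow> \<not> is_wit (?r v)" using aw yw by auto
  have aux: "\<And>G \<psi>. q \<notin> set (letters G) \<Longrightarrow>
    (\<forall>i\<in>set (letters G). i \<noteq> q \<longrightarrow> henkin (\<chi> i) \<and> a \<notin> allvars (\<chi> i) \<and> y \<notin> allvars (\<chi> i)) \<Longrightarrow>
    \<psi> \<in> inst ?ca G \<Longrightarrow> \<exists>\<psi>'\<in>inst ?cf G. Thm (Imp (All y (rename ?r \<psi>)) \<psi>')"
  proof -
    fix G \<psi>
    assume nq: "q \<notin> set (letters G)"
      and c: "\<forall>i\<in>set (letters G). i \<noteq> q \<longrightarrow> henkin (\<chi> i) \<and> a \<notin> allvars (\<chi> i) \<and> y \<notin> allvars (\<chi> i)"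
      and \<psi>: "\<psi> \<in> inst ?ca G"
    have e1: "inst ?ca G = inst \<chi> G" using nq by (intro inst_cong) auto
    have e2: "inst ?cf G = inst \<chi> G" using nq by (intro inst_cong) auto
    have \<psi>': "\<psi> \<in> inst \<chi> G" using \<psi> e1 by simp
    have "\<forall>i\<in>set (letters G). henkin (\<chi> i)" using c nq by metis
    then have h\<psi>: "henkin \<psi>" using henkin_inst[OF _ \<psi>'] by blast
    have "\<forall>i\<in>set (letters G). a \<notin> allvars (\<chi> i)" using c nq by metis
    then have "a \<notin> allvars \<psi>" using wit_notin_inst[OF aw _ \<psi>'] by blast
    then have r\<psi>: "rename ?r \<psi> = \<psi>" by (intro rename_id) auto
    have "PR {All y \<psi>} \<psi>" by (rule pr_inst_self[OF pr_hyp]) (use h\<psi> yw in auto)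
    then have "Thm (Imp (All y \<psi>) \<psi>)" by (rule pr_ded) (use h\<psi> yw in auto)
    then show "\<exists>\<psi>'\<in>inst ?cf G. Thm (Imp (All y (rename ?r \<psi>)) \<psi>')" using r\<psi> \<psi>' e2 by auto
  qed
  show "disjunctive G \<Longrightarrow> distinct (letters G) \<Longrightarrow>
    (\<forall>i\<in>set (letters G). i \<noteq> q \<longrightarrow> henkin (\<chi> i) \<and> a \<notin> allvars (\<chi> i) \<and> y \<notin> allvars (\<chi> i)) \<Longrightarrow>
    \<psi> \<in> inst ?ca G \<Longrightarrow> \<exists>\<psi>'\<in>inst ?cf G. Thm (Imp (All y (rename ?r \<psi>)) \<psi>')"
  proof (induction G arbitrary: \<psi>)
    case (TL i)
    show ?case
    proof (cases "i = q")
      case True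
      then have \<psi>: "\<psi> = subst x a \<phi>" using TL.prems(4) by simp
      have e: "rename ?r \<psi> = subst x y \<phi>" unfolding \<psi> by (rule ren_sub[OF a\<phi>])
      show ?thesis
      proof (rule bexI[of _ "All x \<phi>"])
        show "Thm (Imp (All y (rename ?r \<psi>)) (All x \<phi>))" unfolding e by (rule alpha_thm[OF hx y\<phi> yx yw])
        show "All x \<phi> \<in> inst ?cf (TL i)" using True by simp
      qed
    next
      case False then show ?thesis by (intro aux[OF _ TL.prems(3,4)]) simp
    qed
  next
    case (TNeg G) then show ?case by simp
  next
    case (TAnd G H) then show ?case by simp
  next
    case (TOr G H)
    have cG: "\<forall>i\<in>set (letters G). i \<noteq> q \<longrightarrow> henkin (\<chi> i) \<and> a \<notin> allvars (\<chi> i) \<and> y \<notin> allvars (\<chi> i)"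
      and cH: "\<forall>i\<in>set (letters H). i \<noteq> q \<longrightarrow> henkin (\<chi> i) \<and> a \<notin> allvars (\<chi> i) \<and> y \<notin> allvars (\<chi> i)"
      using TOr.prems(3) by auto
    have dG: "disjunctive G" "distinct (letters G)" and dH: "disjunctive H" "distinct (letters H)"
      using TOr.prems(1,2) by auto
    obtain g h where gh: "\<psi> = Or g h" "g \<in> inst ?ca G" "h \<in> inst ?ca H" using TOr.prems(4) unfolding inst.simps by blast
    have hcaG: "\<forall>i\<in>set (letters G). henkin (?ca i)" using cG hsub by auto
    have hcaH: "\<forall>i\<in>set (letters H). henkin (?ca i)" using cH hsub by auto
    have hcfG: "\<forall>i\<in>set (letters G). henkin (?cf i)" using cG hx by auto
    have hcfH: "\<forall>i\<in>set (letters H). henkin (?cf i)" using cH hx by auto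
    show ?case
    proof (cases "q \<in> set (letters G)")
      case True
      then have nqH: "q \<notin> set (letters H)" using TOr.prems(2) by auto
      obtain g' where g': "g' \<in> inst ?cf G" "Thm (Imp (All y (rename ?r g)) g')"
        using TOr.IH(1)[OF dG cG gh(2)] by blast
      have eH: "inst ?ca H = inst ?cf H" using nqH by (intro inst_cong) auto
      have eH2: "inst ?ca H = inst \<chi> H" using nqH by (intro inst_cong) auto
      have aH: "\<forall>i\<in>set (letters H). a \<notin> allvars (\<chi> i)" "\<forall>i\<in>set (letters H). y \<notin> allvars (\<chi> i)"
        using cH nqH by metis+
      have "a \<notin> allvars h" using wit_notin_inst[OF aw aH(1) gh(3)[unfolded eH2]] .
      then have rh: "rename ?r h = h" by (intro rename_id) auto
      have "fv h \<subseteq> (\<Union>i\<in>set (letters H). allvars (\<chi> i))" using fv_inst[OF gh(3)[unfolded eH2]] .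
      then have yh: "y \<notin> fv h" using aH(2) by blast
      have hg: "henkin g" using henkin_inst[OF hcaG gh(2)] .
      have hh: "henkin h" using henkin_inst[OF hcaH gh(3)] .
      have hg': "henkin g'" using henkin_inst[OF hcfG g'(1)] .
      have hRg: "henkin (rename ?r g)" by (rule henkin_rename[OF hg rnw])
      have "Thm (Imp (All y (Or (rename ?r g) h)) (Or g' h))"
        by (rule or_left[OF g'(2) hRg hg' hh yw yh])
      moreover have "Or g' h \<in> inst ?cf (TOr G H)" using g'(1) gh(3) eH by auto
      moreover have "rename ?r \<psi> = Or (rename ?r g) h" unfolding gh(1) rename_Or rh ..
      ultimately show ?thesis by (metis)
    next
      case False
      note nqG = False
      have eG: "inst ?ca G = inst ?cf G" using nqG by (intro inst_cong) auto
      have eG2: "inst ?ca G = inst \<chi> G" using nqG by (intro inst_cong) auto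
      show ?thesis
      proof (cases "q \<in> set (letters H)")
        case True
        obtain h' where h': "h' \<in> inst ?cf H" "Thm (Imp (All y (rename ?r h)) h')"
          using TOr.IH(2)[OF dH cH gh(3)] by blast
        have aG: "\<forall>i\<in>set (letters G). a \<notin> allvars (\<chi> i)" "\<forall>i\<in>set (letters G). y \<notin> allvars (\<chi> i)"
          using cG nqG by metis+
        have "a \<notin> allvars g" using wit_notin_inst[OF aw aG(1) gh(2)[unfolded eG2]] .
        then have rg: "rename ?r g = g" by (intro rename_id) auto
        have "fv g \<subseteq> (\<Union>i\<in>set (letters G). allvars (\<chi> i))" using fv_inst[OF gh(2)[unfolded eG2]] .
        then have yg: "y \<notin> fv g" using aG(2) by blast
        have hg: "henkin g" using henkin_inst[OF hcaG gh(2)] .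
        have hh: "henkin h" using henkin_inst[OF hcaH gh(3)] .
        have hh': "henkin h'" using henkin_inst[OF hcfH h'(1)] .
        have hRh: "henkin (rename ?r h)" by (rule henkin_rename[OF hh rnw])
        have "Thm (Imp (All y (Or g (rename ?r h))) (Or g h'))"
          by (rule or_right[OF h'(2) hg hRh hh' yw yg])
        moreover have "Or g h' \<in> inst ?cf (TOr G H)" using h'(1) gh(2) eG by auto
        moreover have "rename ?r \<psi> = Or g (rename ?r h)" unfolding gh(1) rename_Or rg ..
        ultimately show ?thesis by (metis)
      next
        case False
        then show ?thesis using nqG by (intro aux[OF _ TOr.prems(3,4)]) simp
      qed
    qed
  next
    case (TBox G)
    show ?case
    proof (cases "q \<in> set (letters G)")
      case False then show ?thesis by (intro aux[OF _ TBox.prems(3,4)]) simp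
    next
      case True
      have cG: "\<forall>i\<in>set (letters G). i \<noteq> q \<longrightarrow> henkin (\<chi> i) \<and> a \<notin> allvars (\<chi> i) \<and> y \<notin> allvars (\<chi> i)"
        using TBox.prems(3) by auto
      have dG: "disjunctive G" "distinct (letters G)" using TBox.prems(1,2) by auto
      obtain t p where tp: "\<psi> = Just t (wits p) p" "henkin_tm t" "p \<in> inst ?ca G" using TBox.prems(4) unfolding inst.simps by blast
      obtain p' where p': "p' \<in> inst ?cf G" "Thm (Imp (All y (rename ?r p)) p')"
        using TBox.IH[OF dG cG tp(3)] by blast
      have hcaG: "\<forall>i\<in>set (letters G). henkin (?ca i)" using cG hsub by auto
      have hcfG: "\<forall>i\<in>set (letters G). henkin (?cf i)" using cG hx by auto
      have hp: "henkin p" using henkin_inst[OF hcaG tp(3)] .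
      have hp': "henkin p'" using henkin_inst[OF hcfG p'(1)] .
      let ?W = "wits p'"
      let ?R = "rename ?r p"
      let ?X = "?r |`| wits p"
      have rt: "rename_tm ?r t = t" using tp(2) henkin_tm_allvars aw by (intro rename_tm_id) auto
      have ren\<psi>: "rename ?r \<psi> = Just t ?X ?R" using tp(1) rt by simp
      have hR: "henkin ?R" by (rule henkin_rename[OF hp rnw])
      have ws: "fset (wits (subst x a \<phi>)) \<subseteq> insert a (fset (wits \<phi>))"
        using wits_substs[of "id(x:=a)" \<phi>] unfolding subst_def by auto
      have wall: "fset (wits (All x \<phi>)) = fset (wits \<phi>)" using xw by auto
      have wsub: "fset (wits p) - {a} \<subseteq> fset ?W"
      proof
        fix w assume w: "w \<in> fset (wits p) - {a}"
        then obtain i where i: "i \<in> set (letters G)" "w \<in> fset (wits (?ca i))" using wits_inst[OF tp(3)] by auto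
        have "w \<in> fset (wits (?cf i))"
        proof (cases "i = q")
          case True then show ?thesis using i ws wall w by auto
        next
          case False then show ?thesis using i by simp
        qed
        then have "w \<in> (\<Union>j\<in>set (letters G). fset (wits (?cf j)))" using i(1) by blast
        then show "w \<in> fset ?W" by (simp only: wits_inst[OF p'(1)])
      qed
      have wr: "fset (wits ?R) \<subseteq> ?r ` fset (wits p)" by (rule wits_rename[OF rnw])
      have wR: "fset (wits ?R) \<subseteq> fset ?W"
      proof
        fix w assume w: "w \<in> fset (wits ?R)"
        then have "w \<in> ?r ` fset (wits p)" using wr by blast
        then obtain u where u: "u \<in> fset (wits p)" "w = ?r u" by blast
        have "is_wit w" using wits_is_wit w by blast
        then have "u \<noteq> a" using u yw by auto
        then have "w = u" using u by simp
        then show "w \<in> fset ?W" using wsub u \<open>u \<noteq> a\<close> by blast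
      qed
      have wRX: "wits ?R |\<subseteq>| ?X" using wr by (simp add: less_eq_fset.rep_eq)
      have Xsub: "fset ?X \<subseteq> insert y (fset ?W)"
      proof
        fix v assume "v \<in> fset ?X"
        then obtain u where u: "u \<in> fset (wits p)" "v = ?r u" by auto
        show "v \<in> insert y (fset ?W)"
        proof (cases "u = a")
          case True then show ?thesis using u by simp
        next
          case False then show ?thesis using u wsub by auto
        qed
      qed
      have yW: "y |\<notin>| ?W" using wits_is_wit yw by blast
      have S1: "Thm (Imp (Just t ?X ?R) (Just t (finsert y ?W) ?R))"
        by (rule jsub) (use tp(2) hR wRX Xsub wR in \<open>auto simp: less_eq_fset.rep_eq\<close>)
      have S2: "Thm (Imp (All y (Just t ?X ?R)) (All y (Just t (finsert y ?W) ?R)))"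
        by (rule all_mono[OF S1]) (use tp(2) hR wRX wR yw in \<open>auto simp: less_eq_fset.rep_eq\<close>)
      have S3: "Thm (Imp (All y (Just t (finsert y ?W) ?R)) (Just (JB t) ?W (All y ?R)))"
        by (rule pr_ax) (use tp(2) hR wR yw yW in \<open>auto simp: less_eq_fset.rep_eq intro: axiom.Bb\<close>)
      obtain s where s: "henkin_tm s" "Thm (Just s (wits (Imp (All y ?R) p')) (Imp (All y ?R) p'))"
        using internalize[OF p'(2)] by blast
      have wI: "wits (Imp (All y ?R) p') = ?W" using wR yw by (auto simp: fset_eq_iff)
      have s': "Thm (Just s ?W (Imp (All y ?R) p'))" using s(2) wI by simp
      have B2: "Thm (Imp (Just s ?W (Imp (All y ?R) p')) (Imp (Just (JB t) ?W (All y ?R)) (Just (JApp s (JB t)) ?W p')))"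
        by (rule pr_ax) (use s tp(2) hR hp' wR yw in \<open>auto simp: less_eq_fset.rep_eq intro: axiom.B2\<close>)
      have S4: "Thm (Imp (Just (JB t) ?W (All y ?R)) (Just (JApp s (JB t)) ?W p'))" by (rule pr_mp[OF B2 s'])
      have S23: "Thm (Imp (All y (Just t ?X ?R)) (Just (JB t) ?W (All y ?R)))"
        by (rule pr_trans[OF S2 S3]) (use tp(2) hR wRX yw in \<open>auto simp: less_eq_fset.rep_eq\<close>)
      have S: "Thm (Imp (All y (Just t ?X ?R)) (Just (JApp s (JB t)) ?W p'))"
        by (rule pr_trans[OF S23 S4]) (use tp(2) hR wRX yw in \<open>auto simp: less_eq_fset.rep_eq\<close>)
      have "Just (JApp s (JB t)) ?W p' \<in> inst ?cf (TBox G)" using p'(1) s(1) tp(2) by auto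
      moreover have "Thm (Imp (All y (rename ?r \<psi>)) (Just (JApp s (JB t)) ?W p'))" unfolding ren\<psi> by (rule S)
      ultimately show ?thesis by blast
    qed
  qed
qed

end

lemma ex_fresh: "finite V \<Longrightarrow> \<exists>y. y \<notin> V \<and> \<not> is_wit y"
proof (rule ccontr)
  assume f: "finite V" and n: "\<not> (\<exists>y. y \<notin> V \<and> \<not> is_wit y)"
  then have "range BV \<subseteq> V" by auto
  moreover have "infinite (range BV)"
  proof
    assume "finite (range BV)"
    then have "finite (UNIV :: nat set)" using finite_imageD[of BV "UNIV::nat set"] by (auto simp: inj_on_def)
    then show False by simp
  qed
  ultimately show False using f finite_subset by blast
qed

lemma inj_Neg: "inj Neg" by (simp add: inj_def Neg_def)

definition rv :: "var \<Rightarrow> var \<Rightarrow> var \<Rightarrow> var" where "rv a y = id(a:=y)"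

context L begin

lemma pr_cut: "finite T \<Longrightarrow> PR (T \<union> G) p \<Longrightarrow> \<forall>t\<in>T. PR G t \<Longrightarrow> \<forall>g\<in>T \<union> G. henkin g \<Longrightarrow> PR G p"
proof (induction T arbitrary: p rule: finite_induct)
  case empty then show ?case by simp
next
  case (insert t T)
  have "PR (insert t (T \<union> G)) p" using insert.prems(1) by simp
  then have "PR (T \<union> G) (Imp t p)" by (rule pr_ded) (use insert.prems(3) in auto)
  then have "PR G (Imp t p)" by (rule insert.IH) (use insert.prems in auto)
  then show ?case using pr_mp[OF _ bspec[OF insert.prems(2)]] by blast
qed

lemma thm_derives: "Thm X \<Longrightarrow> derives CS {} X"
  unfolding provable_def by auto

lemma ren_derives: "derives CS H p \<Longrightarrow> is_wit a \<Longrightarrow> (\<forall>h\<in>H. a \<notin> allvars h) \<Longrightarrow>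
  \<exists>S. finite S \<and> (\<forall>y. y \<notin> S \<longrightarrow> \<not> is_wit y \<longrightarrow> derives CS H (rename (rv a y) p))"
proof (induction rule: derives.induct)
  case (hyp p)
  show ?case
  proof (intro exI[of _ "{}"] conjI allI impI)
    fix y
    have "rename (rv a y) p = p" by (rule rename_id) (use hyp.prems in \<open>auto simp: rv_def\<close>)
    then show "derives CS {p} (rename (rv a y) p)" by (subst \<open>rename (rv a y) p = p\<close>) (rule derives.hyp)
  qed simp
next
  case (ax p)
  show ?case
  proof (intro exI[of _ "allvars p"] conjI allI impI)
    fix y assume y: "y \<notin> allvars p" "\<not> is_wit y"
    have inj: "inj_on (rv a y) (allvars p)" using y by (auto simp: inj_on_def rv_def)
    have rnw: "\<forall>v. \<not> is_wit v \<longrightarrow> \<not> is_wit ((rv a y) v)" using ax.prems(1) y(2) by (auto simp: rv_def)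
    have "axiom (rename (rv a y) p)" by (rule axiom_rename[OF ax.hyps(1) inj])
    moreover have "henkin (rename (rv a y) p)" by (rule henkin_rename[OF ax.hyps(2) rnw])
    ultimately show "derives CS {} (rename (rv a y) p)" by (rule derives.ax)
  qed simp
next
  case (mp H1 p q H2)
  obtain S1 where S1: "finite S1" "\<forall>y. y \<notin> S1 \<longrightarrow> \<not> is_wit y \<longrightarrow> derives CS H1 (rename (rv a y) (Imp p q))"
    using mp by auto
  obtain S2 where S2: "finite S2" "\<forall>y. y \<notin> S2 \<longrightarrow> \<not> is_wit y \<longrightarrow> derives CS H2 (rename (rv a y) p)"
    using mp by auto
  show ?case
  proof (intro exI[of _ "S1 \<union> S2"] conjI allI impI)
    fix y assume y: "y \<notin> S1 \<union> S2" "\<not> is_wit y"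
    have 1: "derives CS H1 (Imp (rename (rv a y) p) (rename (rv a y) q))"
      using S1(2) y by (simp only: rename.simps) blast
    have 2: "derives CS H2 (rename (rv a y) p)" using S2(2) y by blast
    show "derives CS (H1 \<union> H2) (rename (rv a y) q)" by (rule derives.mp[OF 1 2])
  qed (use S1 S2 in simp)
next
  case (gen H p x)
  obtain S where S: "finite S" "\<forall>y. y \<notin> S \<longrightarrow> \<not> is_wit y \<longrightarrow> derives CS H (rename (rv a y) p)"
    using gen by auto
  have xa: "x \<noteq> a" using gen.hyps(2) gen.prems(1) by auto
  show ?case
  proof (intro exI[of _ "S"] conjI allI impI)
    fix y assume y: "y \<notin> S" "\<not> is_wit y"
    have d: "derives CS H (rename (rv a y) p)" using S(2) y by blast
    have "derives CS H (All x (rename (rv a y) p))" by (rule derives.gen[OF d gen.hyps(2,3)])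
    moreover have "rename (rv a y) (All x p) = All x (rename (rv a y) p)" using xa by (simp add: rv_def)
    ultimately show "derives CS H (rename (rv a y) (All x p))" by simp
  qed (use S in simp)
next
  case (cs p)
  show ?case
  proof (cases "a \<in> allvars p")
    case False
    show ?thesis
    proof (intro exI[of _ "{}"] conjI allI impI)
      fix y
      have e: "rename (rv a y) p = p" by (rule rename_id) (use False in \<open>auto simp: rv_def\<close>)
      show "derives CS {} (rename (rv a y) p)" by (subst e) (rule derives.cs[OF cs.hyps])
    qed simp
  next
    case True
    obtain c A B s where p: "p = Just (JC c) (wits B) B" and A: "Just (JC c) {||} A \<in> CS"
      and sc: "\<forall>v. s v \<noteq> v \<longrightarrow> v \<in> fv A \<and> \<not> is_wit v \<and> is_wit (s v)" and si: "inj_on s {v. s v \<noteq> v}"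
      and B: "B = substs s A"
      using cs.hyps unfolding CSV_def by blast
    have bA: "wits A = {||}" using CS_elem[OF A] by (simp add: basic_def)
    have hA: "henkin A" using basic_henkin[OF bA] .
    have aA: "a \<notin> allvars A" using wits_allvars[OF cs.prems(1)] bA by auto
    have aWB: "a |\<in>| wits B" using True p wits_allvars[OF cs.prems(1)] by auto
    have aB: "a \<in> allvars B" using aWB wits_allvars[OF cs.prems(1)] by blast
    have "a \<in> allvars A \<union> s ` allvars A" using allvars_substs[of s A] B aB by blast
    then obtain v0 where v0: "v0 \<in> allvars A" "s v0 = a" using aA by blast
    have sv0: "s v0 \<noteq> v0" using v0 aA by auto
    have v0w: "\<not> is_wit v0" using sc sv0 by blast
    define s0 where "s0 = s(v0 := v0)"
    define B0 where "B0 = substs s0 A"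
    have s0c: "\<forall>v. s0 v \<noteq> v \<longrightarrow> v \<in> fv A \<and> \<not> is_wit v \<and> is_wit (s0 v)" using sc by (auto simp: s0_def)
    have s0i: "inj_on s0 {v. s0 v \<noteq> v}"
    proof (rule inj_onI)
      fix u v assume u: "u \<in> {v. s0 v \<noteq> v}" and v: "v \<in> {v. s0 v \<noteq> v}" and e: "s0 u = s0 v"
      have "u \<noteq> v0" "v \<noteq> v0" using u v by (auto simp: s0_def)
      then have "s u \<noteq> u" "s v \<noteq> v" "s u = s v" using u v e by (auto simp: s0_def)
      then show "u = v" using si by (auto simp: inj_on_def)
    qed
    have csv0: "Just (JC c) (wits B0) B0 \<in> CSV CS" unfolding CSV_def mem_Collect_eq B0_def
      by (intro exI[of _ c] exI[of _ A] exI[of _ "substs s0 A"] conjI refl A exI[of _ s0] s0c s0i)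
    have hB0: "henkin B0" unfolding B0_def using hA s0c by (intro henkin_substs) auto
    define W0 where "W0 = wits B0"
    define F2 where "F2 = Just (JC c) (finsert v0 W0) B0"
    have hF2: "henkin F2" using hB0 by (auto simp: F2_def W0_def less_eq_fset.rep_eq)
    have t1: "Thm (Just (JC c) W0 B0)" using pr_cs[OF csv0] by (simp add: W0_def)
    have a3: "Thm (Imp (Just (JC c) W0 B0) F2)" unfolding F2_def
      using hB0 by (intro pr_ax) (auto intro: axiom.A3 simp: W0_def)
    have t2: "Thm F2" by (rule pr_mp[OF a3 t1])
    have t3: "Thm (All v0 F2)" by (rule pr_gen[OF t2 v0w]) simp
    define S where "S = allvars A \<union> allvars p"
    show ?thesis
    proof (intro exI[of _ S] conjI allI impI)
      show "finite S" by (simp add: S_def)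
      fix y assume yS: "y \<notin> S" and yw: "\<not> is_wit y"
      let ?r = "rv a y"
      have yA: "y \<notin> allvars A" using yS S_def by auto
      have yB0: "y \<notin> allvars B0"
      proof
        assume "y \<in> allvars B0"
        then have "y \<in> allvars A \<union> s0 ` allvars A" using allvars_substs[of s0 A] unfolding B0_def by blast
        then obtain v where v: "v \<in> allvars A" "y = s0 v" using yA by blast
        show False
        proof (cases "s0 v = v")
          case True then show False using v yA by simp
        next
          case False then show False using s0c v yw by auto
        qed
      qed
      have yfv: "y \<notin> fv B0" using yB0 fv_allvars by blast
      have ff: "freefor v0 y F2" unfolding F2_def using yfv freefor_fresh[OF yB0] by simp
      have hsub: "henkin (subst v0 y F2)" unfolding subst_def using hF2 v0w by (intro henkin_substs) auto
      have t4: "Thm (subst v0 y F2)"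
        by (rule pr_mp[OF pr_ax[OF axiom.A1_inst[OF ff]] t3]) (use hF2 hsub v0w in simp)
      have fi: "(\<lambda>v. if v |\<in>| finsert v0 W0 then (id(v0:=y)) v else v) = id(v0:=y)" by (rule ext) auto
      have e4: "subst v0 y F2 = Just (JC c) (id(v0:=y) |`| finsert v0 W0) (substs (id(v0:=y)) B0)"
        unfolding subst_def F2_def by (simp only: substs.simps fi)
      have c1: "substs (id(v0:=y)) (substs s0 A) = substs (id(v0:=y) \<circ> s0) A"
        by (rule substs_comp[OF bA]) (use s0c v0w in auto)
      have injA: "inj_on ?r (allvars A)" using aA by (auto simp: inj_on_def rv_def)
      have c2: "rename ?r (substs s A) = substs (id(v0:=y) \<circ> s0) (rename ?r A)"
      proof (rule rename_substs[OF injA])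
        show "\<forall>v\<in>allvars A. (id(v0:=y) \<circ> s0) (?r v) = ?r (s v)"
        proof
          fix v assume v: "v \<in> allvars A"
          then have va: "v \<noteq> a" using aA by auto
          show "(id(v0:=y) \<circ> s0) (?r v) = ?r (s v)"
          proof (cases "v = v0")
            case True then show ?thesis using v0 va by (simp add: s0_def rv_def)
          next
            case False
            have n1: "s v \<noteq> v0"
            proof
              assume e: "s v = v0"
              then have "s v \<noteq> v" using False by simp
              then have "is_wit (s v)" using sc by blast
              then show False using e v0w by simp
            qed
            have n2: "s v \<noteq> a"
            proof
              assume e: "s v = a"
              then have "s v \<noteq> v" using va by simp
              then have "v = v0" using si sv0 e v0(2) by (auto simp: inj_on_def)
              then show False using False by simp
            qed
            show ?thesis using False va n1 n2 by (simp add: s0_def rv_def)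
          qed
        qed
      qed
      have c3: "rename ?r A = A" by (rule rename_id) (use aA in \<open>auto simp: rv_def\<close>)
      have eB: "rename ?r B = substs (id(v0:=y)) B0"
        unfolding B B0_def c1 c2 c3 ..
      have t5: "Thm (Just (JC c) (id(v0:=y) |`| finsert v0 W0) (rename ?r B))"
        using t4 unfolding e4 eB .
      have rnw: "\<forall>v. \<not> is_wit v \<longrightarrow> \<not> is_wit (?r v)" using cs.prems(1) yw by (auto simp: rv_def)
      have wr: "fset (wits (rename ?r B)) \<subseteq> ?r ` fset (wits B)" by (rule wits_rename[OF rnw])
      have "?r a = y" by (simp add: rv_def)
      then have yY: "y \<in> ?r ` fset (wits B)" using aWB by (metis image_eqI)
      have sub2: "fset (id(v0:=y) |`| finsert v0 W0) \<inter> fv (rename ?r B) \<subseteq> fset (?r |`| wits B)"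
      proof
        fix z assume z: "z \<in> fset (id(v0:=y) |`| finsert v0 W0) \<inter> fv (rename ?r B)"
        then have "z \<in> fset (id(v0:=y) |`| finsert v0 W0)" by blast
        then have "z \<in> (id(v0:=y)) ` fset (finsert v0 W0)" by (simp only: fimage.rep_eq)
        then obtain u where u: "u \<in> fset (finsert v0 W0)" "z = (id(v0:=y)) u" by (rule imageE)
        show "z \<in> fset (?r |`| wits B)"
        proof (cases "u = v0")
          case True then show ?thesis using u yY by simp
        next
          case False
          then have "u |\<in>| W0" "z = u" using u by auto
          then have "is_wit z" unfolding W0_def using wits_is_wit by blast
          then have "z |\<in>| wits (rename ?r B)" using fv_wits z by blast
          then show ?thesis using wr by auto
        qed
      qed
      have t6: "Thm (Just (JC c) (?r |`| wits B) (rename ?r B))"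
        by (rule jsub_thm[OF t5 _ sub2]) (use wr in \<open>simp add: less_eq_fset.rep_eq\<close>)
      have ep: "rename ?r p = Just (JC c) (?r |`| wits B) (rename ?r B)" unfolding p by simp
      show "derives CS {} (rename ?r p)" unfolding ep by (rule thm_derives[OF t6])
    qed
  qed
qed

end

theorem mainTheorem15:
  fixes CS :: "fm set" and F :: tmpl and q :: nat and \<chi> :: "nat \<Rightarrow> fm"
    and \<Gamma> :: "fm set" and x a :: var and \<phi> :: fm
  assumes "const_spec CS" and "variant_closed CS" and "axiomatically_appropriate CS"
    and "template F" and "disjunctive F"
    and "\<forall>\<psi>\<in>\<Gamma>. basic \<psi>"
    and "\<forall>i\<in>set (letters F). i \<noteq> q \<longrightarrow> henkin (\<chi> i)"
    and "henkin (All x \<phi>)"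
    and "is_wit a"
    and "a \<notin> fv (All x \<phi>)"
    and "\<forall>i\<in>set (letters F). i \<noteq> q \<longrightarrow> a \<notin> fv (\<chi> i)"
    and "consistent CS (\<Gamma> \<union> inst (\<chi>(q := All x \<phi>)) (TNeg F))"
  shows "consistent CS (\<Gamma> \<union> inst (\<chi>(q := subst x a \<phi>)) (TNeg F))"
proof -
  interpret L CS using assms(1,3) by unfold_locales
  let ?ca = "\<chi>(q := subst x a \<phi>)"
  let ?cf = "\<chi>(q := All x \<phi>)"
  have xw: "\<not> is_wit x" using assms(8) by simp
  have hsub: "henkin (subst x a \<phi>)" using assms(8) xw unfolding subst_def by (intro henkin_substs) auto
  have hca: "\<forall>i\<in>set (letters F). henkin (?ca i)" using assms(7) hsub by auto
  have h\<Gamma>: "\<forall>g\<in>\<Gamma>. henkin g" using assms(6) basic_henkin unfolding basic_def by blast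
  have ax: "a \<noteq> x" using assms(9) xw by auto
  have a\<phi>: "a \<notin> allvars \<phi>"
  proof
    assume "a \<in> allvars \<phi>"
    then have "a |\<in>| wits \<phi>" using wits_allvars[OF assms(9)] by blast
    then have "a \<in> fv \<phi>" using henkin_wits_fv assms(8) by auto
    then show False using assms(10) ax by simp
  qed
  have a\<chi>: "\<forall>i\<in>set (letters F). i \<noteq> q \<longrightarrow> a \<notin> allvars (\<chi> i)"
  proof (intro ballI impI)
    fix i assume i: "i \<in> set (letters F)" "i \<noteq> q"
    show "a \<notin> allvars (\<chi> i)"
    proof
      assume "a \<in> allvars (\<chi> i)"
      then have "a |\<in>| wits (\<chi> i)" using wits_allvars[OF assms(9)] by blast
      then have "a \<in> fv (\<chi> i)" using henkin_wits_fv assms(7) i by blast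
      then show False using assms(11) i by blast
    qed
  qed
  show ?thesis
  proof (rule ccontr)
    assume nc: "\<not> consistent CS (\<Gamma> \<union> inst ?ca (TNeg F))"
    then obtain H where H: "H \<subseteq> \<Gamma> \<union> inst ?ca (TNeg F)" "derives CS H Bot"
      unfolding consistent_def provable_def by blast
    have fH: "finite H" using derives_finite[OF H(2)] .
    define S where "S = {\<psi> \<in> inst ?ca F. Neg \<psi> \<in> H}"
    have "S \<subseteq> Neg -` H" unfolding S_def by auto
    moreover have "finite (Neg -` H)" using fH inj_Neg by (intro finite_vimageI) auto
    ultimately have fS: "finite S" using finite_subset by blast
    have Hsplit: "H \<subseteq> Neg ` S \<union> (H \<inter> \<Gamma>)" using H(1) unfolding S_def by auto
    show False
    proof (cases "S = {}")
      case True
      then have "H \<subseteq> \<Gamma>" using Hsplit by auto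
      then have "provable CS (\<Gamma> \<union> inst ?cf (TNeg F)) Bot" using H(2) unfolding provable_def by blast
      then show False using assms(12) unfolding consistent_def by blast
    next
      case False
      have Sinst: "S \<subseteq> inst ?ca F" unfolding S_def by auto
      obtain \<psi>s where \<psi>s: "\<psi>s \<in> inst ?ca F" "\<forall>s\<in>S. provable CS {} (Imp s \<psi>s)"
        using mergeN[OF fS False Sinst assms(5) hca] by blast
      have h\<psi>s: "henkin \<psi>s" using henkin_inst[OF hca \<psi>s(1)] .
      let ?G = "insert (Neg \<psi>s) (H \<inter> \<Gamma>)"
      have hG: "\<forall>g\<in>?G. henkin g" using h\<Gamma> h\<psi>s by auto
      have hS: "\<forall>s\<in>S. henkin s" using Sinst henkin_inst[OF hca] by blast
      have negs: "\<forall>t\<in>Neg ` S. provable CS ?G t"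
      proof
        fix t assume "t \<in> Neg ` S"
        then obtain \<psi> where \<psi>: "\<psi> \<in> S" "t = Neg \<psi>" by blast
        have 1: "provable CS (insert \<psi> ?G) \<psi>s"
          using pr_mp[OF thm_pr[OF bspec[OF \<psi>s(2) \<psi>(1)]] pr_hyp[of \<psi>]] by simp
        have 2: "provable CS (insert \<psi> ?G) (Imp \<psi>s Bot)" by (rule pr_hyp) (simp add: Neg_def)
        have 3: "provable CS (insert \<psi> ?G) Bot" by (rule pr_mp[OF 2 1])
        have "provable CS ?G (Imp \<psi> Bot)" by (rule pr_ded[OF 3 hG]) (use hS \<psi> in auto)
        then show "provable CS ?G t" using \<psi>(2) by (simp add: Neg_def)
      qed
      have "provable CS (Neg ` S \<union> ?G) Bot" using H Hsplit unfolding provable_def by blast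
      then have "provable CS ?G Bot"
        by (rule pr_cut[OF finite_imageI[OF fS] _ negs]) (use hG hS in auto)
      then have "provable CS (H \<inter> \<Gamma>) (Imp (Neg \<psi>s) Bot)" by (rule pr_ded) (use h\<Gamma> h\<psi>s in auto)
      then have "provable CS (H \<inter> \<Gamma>) \<psi>s" using pr_DN h\<psi>s by (simp add: Neg_def[of "Neg \<psi>s"])
      then obtain H0 where H0: "H0 \<subseteq> H \<inter> \<Gamma>" "derives CS H0 \<psi>s" unfolding provable_def by blast
      have fH0: "finite H0" using derives_finite[OF H0(2)] .
      have aH0: "\<forall>h\<in>H0. a \<notin> allvars h"
      proof
        fix h assume "h \<in> H0"
        then have "wits h = {||}" using H0(1) assms(6) unfolding basic_def by auto
        then show "a \<notin> allvars h" using wits_allvars[OF assms(9)] by auto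
      qed
      obtain Sr where Sr: "finite Sr" "\<forall>y. y \<notin> Sr \<longrightarrow> \<not> is_wit y \<longrightarrow> derives CS H0 (rename (rv a y) \<psi>s)"
        using ren_derives[OF H0(2) assms(9) aH0] by blast
      define V where "V = Sr \<union> allvars \<phi> \<union> {x} \<union> (\<Union>h\<in>H0. fv h) \<union> (\<Union>i\<in>set (letters F). allvars (\<chi> i))"
      have "\<And>h. finite (fv h)" using fv_allvars finite_allvars finite_subset by metis
      then have "finite (\<Union>h\<in>H0. fv h)" using fH0 by blast
      then have fV: "finite V" unfolding V_def using Sr(1) by auto
      obtain y where y: "y \<notin> V" "\<not> is_wit y" using ex_fresh[OF fV] by blast
      have d: "derives CS H0 (rename (id(a:=y)) \<psi>s)" using Sr(2) y V_def unfolding rv_def by auto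
      have dg: "derives CS H0 (All y (rename (id(a:=y)) \<psi>s))"
        by (rule derives.gen[OF d y(2)]) (use y V_def in auto)
      have conds: "\<forall>i\<in>set (letters F). i \<noteq> q \<longrightarrow> henkin (\<chi> i) \<and> a \<notin> allvars (\<chi> i) \<and> y \<notin> allvars (\<chi> i)"
        using assms(7) a\<chi> y V_def by auto
      have y\<phi>: "y \<notin> allvars \<phi>" and yx: "y \<noteq> x" using y V_def by auto
      have dF: "distinct (letters F)" using assms(4) unfolding template_def .
      obtain \<psi>' where \<psi>': "\<psi>' \<in> inst ?cf F" "provable CS {} (Imp (All y (rename (id(a:=y)) \<psi>s)) \<psi>')"
        using fin[OF assms(8) a\<phi> y\<phi> yx y(2) assms(9) assms(5) dF conds \<psi>s(1)] by blast
      have "provable CS H0 (All y (rename (id(a:=y)) \<psi>s))" using dg unfolding provable_def by blast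
      then have p1: "provable CS H0 \<psi>'" by (rule pr_mp[OF thm_pr[OF \<psi>'(2)]])
      have p2: "provable CS (insert (Neg \<psi>') H0) (Imp \<psi>' Bot)" by (rule pr_hyp) (simp add: Neg_def)
      have "provable CS (insert (Neg \<psi>') H0) Bot" by (rule pr_mp[OF p2 pr_mono[OF p1]]) auto
      moreover have "insert (Neg \<psi>') H0 \<subseteq> \<Gamma> \<union> inst ?cf (TNeg F)" using H0(1) \<psi>'(1) by auto
      ultimately have "provable CS (\<Gamma> \<union> inst ?cf (TNeg F)) Bot" by (rule pr_mono)
      then show False using assms(12) unfolding consistent_def by blast
    qed
  qed
qed

end
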